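(* Let $\Omega=(0,L_x)\times(0,L_y)$ discretized by the cell-centered grid with $N_x,N_y$ cells of sizes $h_x=L_x/N_x$, $h_y=L_y/N_y$. Let $M>0$, $\beta>0$, $\alpha\ge 0$, $\Delta t>0$, $F(z)=z^4/4$. Given cell-centered grid functions $Z^{n-1},Z^n,\Psi^n$ and a scalar $R^n$ ($n\ge1$) with $E_1^h(\tilde Z^{n+1/2})>0$, consider the scheme: find grid functions $Z^{n+1},\Psi^{n+1},W^{n+1/2}$ and a scalar $R^{n+1}$ such that $$\Psi^{n+1}-\Psi^{n}+\beta\Delta t\Psi^{n+1/2}=M\Delta t\,\Delta_hW^{n+1/2},\qquad \Delta t\,\Psi^{n+1/2}=Z^{n+1}-Z^n,$$ $$W^{n+1/2}=\Delta_h^2Z^{n+1/2}+2\Delta_h\tilde{Z}^{n+1/2}+\alpha Z^{n+1/2}+\frac{R^{n+1/2}}{\sqrt{E_1^h(\tilde{Z}^{n+1/2})}}F'(\tilde{Z}^{n+1/2}),$$ $$R^{n+1}-R^n=\frac{1}{2\sqrt{E_1^h(\tilde{Z}^{n+1/2}) }}(F'(\tilde{Z}^{n+1/2}),Z^{n+1}-Z^n)_m,$$ with $f^{n+1/2}=(f^{n+1}+f^n)/2$ and $\tilde Z^{n+1/2}=(3Z^n-Z^{n-1})/2$, where all grid functions $Z$, $W$ and $\Delta_hZ$ are extended by the discrete homogeneous Neumann conditions $Z_{0,j}=Z_{1,j}$, $Z_{N_x+1,j}=Z_{N_x,j}$, $Z_{i,0}=Z_{i,1}$, $Z_{i,N_y+1}=Z_{i,N_y}$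 (and identically for $W$ and for $\Delta_hZ$). Then: (i) the scheme has a unique solution; (ii) if $(\Psi^n,1)_m=0$, then $(\Psi^{n+1},1)_m=0$ and $(Z^{n+1},1)_m=(Z^n,1)_m$ (so, if $(\Psi^0,1)_m=0$, mass is conserved at every step); (iii) under this mean-zero condition, $$\tilde{\mathcal{E}}_d(Z^{n+1},R^{n+1},\Psi^{n+1})-\tilde{\mathcal{E}}_d(Z^n,R^n,\Psi^n)\leq -\frac{\beta}{M}\Delta t\,\|\Psi^{n+1/2}\|_{-1}^2,$$ where $\tilde{\mathcal{E}}_d(Z^n,R^n,\Psi^n)=\mathcal{E}_d(Z^n,R^n,\Psi^n)+\frac 1 2\|\nabla_hZ^{n}-\nabla_hZ^{n-1}\|^2$.
   Context: Difference operators: $[d_xg]_{i+1/2,j}=(g_{i+1,j}-g_{i,j})/h_x$, $[d_yg]_{i,j+1/2}=(g_{i,j+1}-g_{i,j})/h_y$, $[D_xg]_{i,j}=(g_{i+1/2,j}-g_{i-1/2,j})/h_x$, $[D_yg]_{i,j}=(g_{i,j+1/2}-g_{i,j-1/2})/h_y$, $\Delta_hg=D_x(d_xg)+D_y(d_yg)$ at cell centers. Inner products: $(f,g)_m=\sum_{i=1}^{N_x}\sum_{j=1}^{N_y}h_xh_yf_{i,j}g_{i,j}$, $(f,g)_x=\sum_{i=1}^{N_x-1}\sum_{j=1}^{N_y}h_xh_yf_{i+1/2,j}g_{i+1/2,j}$, $(f,g)_y=\sum_{i=1}^{N_x}\sum_{j=1}^{N_y-1}h_xh_yf_{i,j+1/2}g_{i,j+1/2}$;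 $\|f\|_m^2=(f,f)_m$, $\|\nabla_hZ\|^2=(d_xZ,d_xZ)_x+(d_yZ,d_yZ)_y$. $E_1^h(Z)=\sum_{i,j}h_xh_yF(Z_{i,j})$. Discrete $H^{-1}$ norm: for $\phi$ with $(\phi,1)_m=0$, let $\eta_\phi$ with $(\eta_\phi,1)_m=0$ solve $-\Delta_h\eta_\phi=\phi$ under the discrete homogeneous Neumann extension; $(\phi_1,\phi_2)_{-1}=(d_x\eta_{\phi_1},d_x\eta_{\phi_2})_x+(d_y\eta_{\phi_1},d_y\eta_{\phi_2})_y$ and $\|\phi\|_{-1}=\sqrt{(\phi,\phi)_{-1}}$. Discrete pseudo energy: $\mathcal{E}_d(Z,R,\Psi)=\frac 1 2 \|\Delta_hZ\|_m^2-\|\nabla_hZ\|^2+\frac \alpha 2 \|Z\|_m^2+R^2+\frac{1}{2M}\|\Psi\|_{-1}^2$. *)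

theory Defs
  imports Complex_Main
begin

type_synonym grid = "nat \<Rightarrow> nat \<Rightarrow> real"

text \<open>Cell-centred grid functions are indexed by i in 1..Nx, j in 1..Ny.
 Face values f_{i+1/2,j} are stored at index (i,j); f_{i,j+1/2} likewise at (i,j).\<close>

definition in_grid :: "nat \<Rightarrow> nat \<Rightarrow> nat \<Rightarrow> nat \<Rightarrow> bool" where
  "in_grid Nx Ny i j \<longleftrightarrow> 1 \<le> i \<and> i \<le> Nx \<and> 1 \<le> j \<and> j \<le> Ny"

definition gridfun :: "nat \<Rightarrow> nat \<Rightarrow> grid \<Rightarrow> bool" where
  "gridfun Nx Ny g \<longleftrightarrow> (\<forall>i j. \<not> in_grid Nx Ny i j \<longrightarrow> g i j = 0)"

text \<open>Discrete homogeneous Neumann extension: Z_{0,j}=Z_{1,j}, Z_{Nx+1,j}=Z_{Nx,j}, etc.\<close>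
definition ext :: "nat \<Rightarrow> nat \<Rightarrow> grid \<Rightarrow> grid" where
  "ext Nx Ny g i j = g (min (max i 1) Nx) (min (max j 1) Ny)"

definition dx :: "nat \<Rightarrow> nat \<Rightarrow> real \<Rightarrow> grid \<Rightarrow> grid" where
  "dx Nx Ny hx g i j = (ext Nx Ny g (i + 1) j - ext Nx Ny g i j) / hx"

definition dy :: "nat \<Rightarrow> nat \<Rightarrow> real \<Rightarrow> grid \<Rightarrow> grid" where
  "dy Nx Ny hy g i j = (ext Nx Ny g i (j + 1) - ext Nx Ny g i j) / hy"

text \<open>[D_x f]_{i,j} = (f_{i+1/2,j} - f_{i-1/2,j})/hx with face i-1/2 stored at i-1.\<close>
definition Dx :: "real \<Rightarrow> grid \<Rightarrow> grid" where
  "Dx hx f i j = (f i j - f (i - 1) j) / hx"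

definition Dy :: "real \<Rightarrow> grid \<Rightarrow> grid" where
  "Dy hy f i j = (f i j - f i (j - 1)) / hy"

definition lap :: "nat \<Rightarrow> nat \<Rightarrow> real \<Rightarrow> real \<Rightarrow> grid \<Rightarrow> grid" where
  "lap Nx Ny hx hy g i j = Dx hx (dx Nx Ny hx g) i j + Dy hy (dy Nx Ny hy g) i j"

definition ip_m :: "nat \<Rightarrow> nat \<Rightarrow> real \<Rightarrow> real \<Rightarrow> grid \<Rightarrow> grid \<Rightarrow> real" where
  "ip_m Nx Ny hx hy f g = (\<Sum>i\<in>{1..Nx}. \<Sum>j\<in>{1..Ny}. hx * hy * f i j * g i j)"

definition ip_x :: "nat \<Rightarrow> nat \<Rightarrow> real \<Rightarrow> real \<Rightarrow> grid \<Rightarrow> grid \<Rightarrow> real" where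
  "ip_x Nx Ny hx hy f g = (\<Sum>i\<in>{1..Nx-1}. \<Sum>j\<in>{1..Ny}. hx * hy * f i j * g i j)"

definition ip_y :: "nat \<Rightarrow> nat \<Rightarrow> real \<Rightarrow> real \<Rightarrow> grid \<Rightarrow> grid \<Rightarrow> real" where
  "ip_y Nx Ny hx hy f g = (\<Sum>i\<in>{1..Nx}. \<Sum>j\<in>{1..Ny-1}. hx * hy * f i j * g i j)"

definition norm_m2 :: "nat \<Rightarrow> nat \<Rightarrow> real \<Rightarrow> real \<Rightarrow> grid \<Rightarrow> real" where
  "norm_m2 Nx Ny hx hy f = ip_m Nx Ny hx hy f f"

definition grad_diff_norm2 :: "nat \<Rightarrow> nat \<Rightarrow> real \<Rightarrow> real \<Rightarrow> grid \<Rightarrow> grid \<Rightarrow> real" where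
  "grad_diff_norm2 Nx Ny hx hy Z Z' =
     ip_x Nx Ny hx hy (\<lambda>i j. dx Nx Ny hx Z i j - dx Nx Ny hx Z' i j)
                      (\<lambda>i j. dx Nx Ny hx Z i j - dx Nx Ny hx Z' i j)
   + ip_y Nx Ny hx hy (\<lambda>i j. dy Nx Ny hy Z i j - dy Nx Ny hy Z' i j)
                      (\<lambda>i j. dy Nx Ny hy Z i j - dy Nx Ny hy Z' i j)"

definition grad_norm2 :: "nat \<Rightarrow> nat \<Rightarrow> real \<Rightarrow> real \<Rightarrow> grid \<Rightarrow> real" where
  "grad_norm2 Nx Ny hx hy Z =
     ip_x Nx Ny hx hy (dx Nx Ny hx Z) (dx Nx Ny hx Z) + ip_y Nx Ny hx hy (dy Nx Ny hy Z) (dy Nx Ny hy Z)"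

definition Fpot :: "real \<Rightarrow> real" where "Fpot z = z ^ 4 / 4"
definition dFpot :: "real \<Rightarrow> real" where "dFpot z = z ^ 3"

definition E1h :: "nat \<Rightarrow> nat \<Rightarrow> real \<Rightarrow> real \<Rightarrow> grid \<Rightarrow> real" where
  "E1h Nx Ny hx hy Z = (\<Sum>i\<in>{1..Nx}. \<Sum>j\<in>{1..Ny}. hx * hy * Fpot (Z i j))"

definition eta :: "nat \<Rightarrow> nat \<Rightarrow> real \<Rightarrow> real \<Rightarrow> grid \<Rightarrow> grid" where
  "eta Nx Ny hx hy \<phi> = (THE \<eta>. gridfun Nx Ny \<eta> \<and> ip_m Nx Ny hx hy \<eta> (\<lambda>_ _. 1) = 0 \<and>
      (\<forall>i j. in_grid Nx Ny i j \<longrightarrow> - lap Nx Ny hx hy \<eta> i j = \<phi> i j))"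

definition ip_neg1 :: "nat \<Rightarrow> nat \<Rightarrow> real \<Rightarrow> real \<Rightarrow> grid \<Rightarrow> grid \<Rightarrow> real" where
  "ip_neg1 Nx Ny hx hy \<phi>1 \<phi>2 =
     ip_x Nx Ny hx hy (dx Nx Ny hx (eta Nx Ny hx hy \<phi>1)) (dx Nx Ny hx (eta Nx Ny hx hy \<phi>2))
   + ip_y Nx Ny hx hy (dy Nx Ny hy (eta Nx Ny hx hy \<phi>1)) (dy Nx Ny hy (eta Nx Ny hx hy \<phi>2))"

definition norm_neg1 :: "nat \<Rightarrow> nat \<Rightarrow> real \<Rightarrow> real \<Rightarrow> grid \<Rightarrow> real" where
  "norm_neg1 Nx Ny hx hy \<phi> = sqrt (ip_neg1 Nx Ny hx hy \<phi> \<phi>)"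

definition Ed :: "nat \<Rightarrow> nat \<Rightarrow> real \<Rightarrow> real \<Rightarrow> real \<Rightarrow> real \<Rightarrow> grid \<Rightarrow> real \<Rightarrow> grid \<Rightarrow> real" where
  "Ed Nx Ny hx hy \<alpha> M Z R \<Psi> =
     1/2 * norm_m2 Nx Ny hx hy (lap Nx Ny hx hy Z) - grad_norm2 Nx Ny hx hy Z
     + \<alpha>/2 * norm_m2 Nx Ny hx hy Z + R^2 + 1/(2*M) * (norm_neg1 Nx Ny hx hy \<Psi>)^2"

definition Ed_tilde :: "nat \<Rightarrow> nat \<Rightarrow> real \<Rightarrow> real \<Rightarrow> real \<Rightarrow> real \<Rightarrow> grid \<Rightarrow> grid \<Rightarrow> real \<Rightarrow> grid \<Rightarrow> real" where
  "Ed_tilde Nx Ny hx hy \<alpha> M Z Zprev R \<Psi> =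
     Ed Nx Ny hx hy \<alpha> M Z R \<Psi> + 1/2 * grad_diff_norm2 Nx Ny hx hy Z Zprev"

text \<open>The scheme: given Z^{n-1} (Zm), Z^n (Z0), Psi^n (Psi0), R^n (R0),
  the unknowns Z^{n+1} (Z1), Psi^{n+1} (Psi1), W^{n+1/2} (W), R^{n+1} (R1)
  satisfy the equations at every grid cell.\<close>
definition scheme :: "nat \<Rightarrow> nat \<Rightarrow> real \<Rightarrow> real \<Rightarrow> real \<Rightarrow> real \<Rightarrow> real \<Rightarrow> real \<Rightarrow>
    grid \<Rightarrow> grid \<Rightarrow> grid \<Rightarrow> real \<Rightarrow> grid \<Rightarrow> grid \<Rightarrow> grid \<Rightarrow> real \<Rightarrow> bool" where
  "scheme Nx Ny hx hy M \<beta> \<alpha> dt Zm Z0 Psi0 R0 Z1 Psi1 W R1 \<longleftrightarrow>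
    (let Zt = (\<lambda>i j. (3 * Z0 i j - Zm i j) / 2);
         Zh = (\<lambda>i j. (Z1 i j + Z0 i j) / 2);
         Psih = (\<lambda>i j. (Psi1 i j + Psi0 i j) / 2);
         Rh = (R1 + R0) / 2;
         E1 = E1h Nx Ny hx hy Zt
     in (\<forall>i j. in_grid Nx Ny i j \<longrightarrow>
            Psi1 i j - Psi0 i j + \<beta> * dt * Psih i j = M * dt * lap Nx Ny hx hy W i j
          \<and> dt * Psih i j = Z1 i j - Z0 i j
          \<and> W i j = lap Nx Ny hx hy (lap Nx Ny hx hy Zh) i j + 2 * lap Nx Ny hx hy Zt i j
                    + \<alpha> * Zh i j + Rh / sqrt E1 * dFpot (Zt i j))
       \<and> R1 - R0 = 1 / (2 * sqrt E1) *
            ip_m Nx Ny hx hy (\<lambda>i j. dFpot (Zt i j)) (\<lambda>i j. Z1 i j - Z0 i j))"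

end

theory Submission
  imports Defs "HOL-Library.Function_Algebras"
begin

definition mask :: "nat \<Rightarrow> nat \<Rightarrow> grid \<Rightarrow> grid" where
  "mask Nx Ny g i j = (if in_grid Nx Ny i j then g i j else 0)"

lemma sum_by_parts_1d:
  fixes a b :: "nat \<Rightarrow> real"
  shows "(\<Sum>i\<in>{1..Suc k}. (a i - a (i-1)) * b i)
     = a (Suc k) * b (Suc k) - a 0 * b 1 - (\<Sum>i\<in>{1..k}. a i * (b (i+1) - b i))"
proof (induction k)
  case 0 then show ?case by (simp add: algebra_simps)
next
  case (Suc k)
  have "(\<Sum>i\<in>{1..Suc (Suc k)}. (a i - a (i-1)) * b i)
     = (\<Sum>i\<in>{1..Suc k}. (a i - a (i-1)) * b i) + (a (Suc (Suc k)) - a (Suc k)) * b (Suc (Suc k))"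
    by simp
  also have "(\<Sum>i\<in>{1..Suc k}. a i * (b (i+1) - b i)) = (\<Sum>i\<in>{1..k}. a i * (b (i+1) - b i)) + a (Suc k) * (b (Suc (Suc k)) - b (Suc k))"
    by simp
  ultimately show ?case using Suc by (simp add: algebra_simps)
qed

lemma sum_by_parts_1d':
  fixes a b :: "nat \<Rightarrow> real"
  assumes "N > 0" "a 0 = 0" "a N = 0"
  shows "(\<Sum>i\<in>{1..N}. (a i - a (i-1)) * b i) = - (\<Sum>i\<in>{1..N-1}. a i * (b (i+1) - b i))"
proof -
  obtain k where k: "N = Suc k" using assms(1) not0_implies_Suc by blast
  show ?thesis using sum_by_parts_1d[of a b k] assms k by simp
qed

locale G =
  fixes Nx Ny :: nat and hx hy :: real
  assumes Nx: "Nx > 0" and Ny: "Ny > 0" and hx: "hx > 0" and hy: "hy > 0"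
begin

lemma ext_in: "in_grid Nx Ny i j \<Longrightarrow> ext Nx Ny g i j = g i j"
  by (simp add: ext_def in_grid_def)

lemma ext_cong: assumes "\<And>i j. in_grid Nx Ny i j \<Longrightarrow> f i j = g i j"
  shows "ext Nx Ny f = ext Nx Ny g"
proof (intro ext)
  fix i j
  have "in_grid Nx Ny (min (max i 1) Nx) (min (max j 1) Ny)" using Nx Ny by (auto simp: in_grid_def)
  then show "ext Nx Ny f i j = ext Nx Ny g i j" using assms by (simp add: ext_def)
qed

lemma lap_cong: assumes "\<And>i j. in_grid Nx Ny i j \<Longrightarrow> f i j = g i j"
  shows "lap Nx Ny hx hy f = lap Nx Ny hx hy g"
  using ext_cong[OF assms] by (simp add: lap_def dx_def dy_def Dx_def Dy_def fun_eq_iff)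

lemma dx_zero_left: "dx Nx Ny hx f 0 j = 0"
  by (simp add: dx_def ext_def)
lemma dx_zero_right: "dx Nx Ny hx f Nx j = 0"
  by (simp add: dx_def ext_def)
lemma dy_zero_left: "dy Nx Ny hy f i 0 = 0"
  by (simp add: dy_def ext_def)
lemma dy_zero_right: "dy Nx Ny hy f i Ny = 0"
  by (simp add: dy_def ext_def)

lemma dx_in: "1 \<le> i \<Longrightarrow> i \<le> Nx - 1 \<Longrightarrow> 1 \<le> j \<Longrightarrow> j \<le> Ny \<Longrightarrow>
   hx * dx Nx Ny hx g i j = g (i+1) j - g i j"
  using hx by (simp add: dx_def ext_def)
lemma dy_in: "1 \<le> j \<Longrightarrow> j \<le> Ny - 1 \<Longrightarrow> 1 \<le> i \<Longrightarrow> i \<le> Nx \<Longrightarrow>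
   hy * dy Nx Ny hy g i j = g i (j+1) - g i j"
  using hy by (simp add: dy_def ext_def)

lemma sbp_x: "ip_m Nx Ny hx hy (Dx hx (dx Nx Ny hx f)) g = - ip_x Nx Ny hx hy (dx Nx Ny hx f) (dx Nx Ny hx g)"
proof -
  let ?a = "dx Nx Ny hx f"
  have "ip_m Nx Ny hx hy (Dx hx ?a) g = (\<Sum>j\<in>{1..Ny}. \<Sum>i\<in>{1..Nx}. hy * ((?a i j - ?a (i-1) j) * g i j))"
    unfolding ip_m_def Dx_def using hx
    by (subst sum.swap) (intro sum.cong refl, simp add: field_simps)
  also have "\<dots> = (\<Sum>j\<in>{1..Ny}. hy * (- (\<Sum>i\<in>{1..Nx-1}. ?a i j * (g (i+1) j - g i j))))"
    by (intro sum.cong refl, subst sum_distrib_left[symmetric], subst sum_by_parts_1d'[OF Nx], simp_all add: dx_zero_left dx_zero_right)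
  also have "\<dots> = - (\<Sum>j\<in>{1..Ny}. \<Sum>i\<in>{1..Nx-1}. hx * hy * ?a i j * dx Nx Ny hx g i j)"
  proof -
    have h: "\<And>i j. j \<in> {1..Ny} \<Longrightarrow> i \<in> {1..Nx-1} \<Longrightarrow>
       hy * (?a i j * (g (i+1) j - g i j)) = hx * hy * ?a i j * dx Nx Ny hx g i j"
    proof -
      fix i j assume "j \<in> {1..Ny}" "i \<in> {1..Nx-1}"
      then have e: "g (i+1) j - g i j = hx * dx Nx Ny hx g i j" using dx_in[of i j g] by auto
      show "hy * (?a i j * (g (i+1) j - g i j)) = hx * hy * ?a i j * dx Nx Ny hx g i j"
        unfolding e by (simp add: algebra_simps)
    qed
    have "(\<Sum>j\<in>{1..Ny}. hy * (- (\<Sum>i\<in>{1..Nx-1}. ?a i j * (g (i+1) j - g i j))))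
       = - (\<Sum>j\<in>{1..Ny}. \<Sum>i\<in>{1..Nx-1}. hy * (?a i j * (g (i+1) j - g i j)))"
      by (simp add: sum_negf sum_distrib_left)
    also have "\<dots> = - (\<Sum>j\<in>{1..Ny}. \<Sum>i\<in>{1..Nx-1}. hx * hy * ?a i j * dx Nx Ny hx g i j)"
      by (intro arg_cong[where f=uminus] sum.cong refl h)
    finally show ?thesis .
  qed
  also have "\<dots> = - ip_x Nx Ny hx hy ?a (dx Nx Ny hx g)"
    unfolding ip_x_def by (subst sum.swap) simp
  finally show ?thesis .
qed

lemma sbp_y: "ip_m Nx Ny hx hy (Dy hy (dy Nx Ny hy f)) g = - ip_y Nx Ny hx hy (dy Nx Ny hy f) (dy Nx Ny hy g)"
proof -
  let ?a = "dy Nx Ny hy f"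
  have "ip_m Nx Ny hx hy (Dy hy ?a) g = (\<Sum>i\<in>{1..Nx}. \<Sum>j\<in>{1..Ny}. hx * ((?a i j - ?a i (j-1)) * g i j))"
    unfolding ip_m_def Dy_def using hy
    by (intro sum.cong refl, simp add: field_simps)
  also have "\<dots> = (\<Sum>i\<in>{1..Nx}. hx * (- (\<Sum>j\<in>{1..Ny-1}. ?a i j * (g i (j+1) - g i j))))"
    by (intro sum.cong refl, subst sum_distrib_left[symmetric], subst sum_by_parts_1d'[OF Ny], simp_all add: dy_zero_left dy_zero_right)
  also have "\<dots> = - (\<Sum>i\<in>{1..Nx}. \<Sum>j\<in>{1..Ny-1}. hx * hy * ?a i j * dy Nx Ny hy g i j)"
  proof -
    have h: "\<And>i j. i \<in> {1..Nx} \<Longrightarrow> j \<in> {1..Ny-1} \<Longrightarrow>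
       hx * (?a i j * (g i (j+1) - g i j)) = hx * hy * ?a i j * dy Nx Ny hy g i j"
    proof -
      fix i j assume "i \<in> {1..Nx}" "j \<in> {1..Ny-1}"
      then have e: "g i (j+1) - g i j = hy * dy Nx Ny hy g i j" using dy_in[of j i g] by auto
      show "hx * (?a i j * (g i (j+1) - g i j)) = hx * hy * ?a i j * dy Nx Ny hy g i j"
        unfolding e by (simp add: algebra_simps)
    qed
    have "(\<Sum>i\<in>{1..Nx}. hx * (- (\<Sum>j\<in>{1..Ny-1}. ?a i j * (g i (j+1) - g i j))))
       = - (\<Sum>i\<in>{1..Nx}. \<Sum>j\<in>{1..Ny-1}. hx * (?a i j * (g i (j+1) - g i j)))"
      by (simp add: sum_negf sum_distrib_left)
    also have "\<dots> = - (\<Sum>i\<in>{1..Nx}. \<Sum>j\<in>{1..Ny-1}. hx * hy * ?a i j * dy Nx Ny hy g i j)"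
      by (intro arg_cong[where f=uminus] sum.cong refl h)
    finally show ?thesis .
  qed
  also have "\<dots> = - ip_y Nx Ny hx hy ?a (dy Nx Ny hy g)"
    unfolding ip_y_def by simp
  finally show ?thesis .
qed

lemma ip_m_add_left: "ip_m Nx Ny hx hy (\<lambda>i j. f i j + g i j) k = ip_m Nx Ny hx hy f k + ip_m Nx Ny hx hy g k"
  by (simp add: ip_m_def sum.distrib[symmetric] algebra_simps)

lemma sbp: "ip_m Nx Ny hx hy (lap Nx Ny hx hy f) g =
   - (ip_x Nx Ny hx hy (dx Nx Ny hx f) (dx Nx Ny hx g) + ip_y Nx Ny hx hy (dy Nx Ny hy f) (dy Nx Ny hy g))"
  unfolding lap_def using ip_m_add_left[of "Dx hx (dx Nx Ny hx f)" "Dy hy (dy Nx Ny hy f)" g] sbp_x sbp_y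
  by simp


end

lemma lap_lin: "lap Nx Ny hx hy (\<lambda>i j. a * f i j + b * g i j) = (\<lambda>i j. a * lap Nx Ny hx hy f i j + b * lap Nx Ny hx hy g i j)"
proof -
  have dx: "dx Nx Ny hx (\<lambda>i j. a * f i j + b * g i j) = (\<lambda>i j. a * dx Nx Ny hx f i j + b * dx Nx Ny hx g i j)"
    by (simp add: dx_def ext_def fun_eq_iff add_divide_distrib diff_divide_distrib algebra_simps)
  have dy: "dy Nx Ny hy (\<lambda>i j. a * f i j + b * g i j) = (\<lambda>i j. a * dy Nx Ny hy f i j + b * dy Nx Ny hy g i j)"
    by (simp add: dy_def ext_def fun_eq_iff add_divide_distrib diff_divide_distrib algebra_simps)
  show ?thesis
    by (simp add: lap_def dx dy Dx_def Dy_def fun_eq_iff add_divide_distrib diff_divide_distrib algebra_simps)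
qed


context G
begin

definition gip :: "grid \<Rightarrow> grid \<Rightarrow> real" where
  "gip f g = ip_x Nx Ny hx hy (dx Nx Ny hx f) (dx Nx Ny hx g) + ip_y Nx Ny hx hy (dy Nx Ny hy f) (dy Nx Ny hy g)"

lemma sbp': "ip_m Nx Ny hx hy (lap Nx Ny hx hy f) g = - gip f g"
  using sbp by (simp add: gip_def)

lemma ip_m_comm: "ip_m Nx Ny hx hy f g = ip_m Nx Ny hx hy g f"
  by (simp add: ip_m_def algebra_simps)

lemma gip_comm: "gip f g = gip g f"
  by (simp add: gip_def ip_x_def ip_y_def algebra_simps)

lemma sq_nn: "0 \<le> hx * hy * x * x"
proof -
  have "hx * hy * x * x = (hx * hy) * (x * x)" by simp
  moreover have "0 \<le> hx * hy" using hx hy by simp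
  ultimately show ?thesis by (metis mult_nonneg_nonneg zero_le_square)
qed

lemma gip_nonneg: "gip f f \<ge> 0"
  unfolding gip_def ip_x_def ip_y_def 
  by (intro add_nonneg_nonneg sum_nonneg sq_nn)

lemma lap_sym: "ip_m Nx Ny hx hy (lap Nx Ny hx hy f) g = ip_m Nx Ny hx hy f (lap Nx Ny hx hy g)"
  by (simp add: sbp' ip_m_comm[of f] gip_comm)

lemma ip_m_cong: "(\<And>i j. in_grid Nx Ny i j \<Longrightarrow> f i j = f' i j) \<Longrightarrow> (\<And>i j. in_grid Nx Ny i j \<Longrightarrow> g i j = g' i j)
   \<Longrightarrow> ip_m Nx Ny hx hy f g = ip_m Nx Ny hx hy f' g'"
  unfolding ip_m_def by (intro sum.cong refl) (simp add: in_grid_def)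

lemma lap_sum_zero: "ip_m Nx Ny hx hy (lap Nx Ny hx hy f) (\<lambda>_ _. c) = 0"
  by (simp add: sbp' gip_def dx_def dy_def ext_def ip_x_def ip_y_def)

lemma ip_x_sq_zero: assumes "ip_x Nx Ny hx hy f f = 0" "1 \<le> i" "i \<le> Nx - 1" "1 \<le> j" "j \<le> Ny"
  shows "f i j = 0"
proof -
  have nn: "\<And>i j. 0 \<le> hx * hy * f i j * f i j" by (rule sq_nn)
  have "\<forall>i\<in>{1..Nx-1}. (\<Sum>j\<in>{1..Ny}. hx * hy * f i j * f i j) = 0"
    using assms(1) unfolding ip_x_def by (subst sum_nonneg_eq_0_iff[symmetric]) (auto intro: sum_nonneg nn)
  then have "(\<Sum>j\<in>{1..Ny}. hx * hy * f i j * f i j) = 0" using assms by auto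
  then have "hx * hy * f i j * f i j = 0" using assms
    by (subst (asm) sum_nonneg_eq_0_iff) (auto intro: nn)
  then show ?thesis using hx hy by (metis mult_eq_0_iff order_less_irrefl)
qed

lemma ip_y_sq_zero: assumes "ip_y Nx Ny hx hy f f = 0" "1 \<le> i" "i \<le> Nx" "1 \<le> j" "j \<le> Ny - 1"
  shows "f i j = 0"
proof -
  have nn: "\<And>i j. 0 \<le> hx * hy * f i j * f i j" by (rule sq_nn)
  have "\<forall>i\<in>{1..Nx}. (\<Sum>j\<in>{1..Ny-1}. hx * hy * f i j * f i j) = 0"
    using assms(1) unfolding ip_y_def by (subst sum_nonneg_eq_0_iff[symmetric]) (auto intro: sum_nonneg nn)
  then have "(\<Sum>j\<in>{1..Ny-1}. hx * hy * f i j * f i j) = 0" using assms by auto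
  then have "hx * hy * f i j * f i j = 0" using assms
    by (subst (asm) sum_nonneg_eq_0_iff) (auto intro: nn)
  then show ?thesis using hx hy by (metis mult_eq_0_iff order_less_irrefl)
qed

lemma gip_zero_parts: assumes "gip f f = 0"
  shows "ip_x Nx Ny hx hy (dx Nx Ny hx f) (dx Nx Ny hx f) = 0" "ip_y Nx Ny hx hy (dy Nx Ny hy f) (dy Nx Ny hy f) = 0"
proof -
  have a: "ip_x Nx Ny hx hy (dx Nx Ny hx f) (dx Nx Ny hx f) \<ge> 0" "ip_y Nx Ny hx hy (dy Nx Ny hy f) (dy Nx Ny hy f) \<ge> 0"
    unfolding ip_x_def ip_y_def by (auto intro!: sum_nonneg sq_nn)
  then show "ip_x Nx Ny hx hy (dx Nx Ny hx f) (dx Nx Ny hx f) = 0" "ip_y Nx Ny hx hy (dy Nx Ny hy f) (dy Nx Ny hy f) = 0"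
    using assms unfolding gip_def by linarith+
qed

lemma gip_zero_left: assumes "gip f f = 0" shows "gip f g = 0"
proof -
  have "ip_x Nx Ny hx hy (dx Nx Ny hx f) (dx Nx Ny hx g) = 0"
    unfolding ip_x_def using ip_x_sq_zero[OF gip_zero_parts(1)[OF assms]] by (intro sum.neutral ballI) auto
  moreover have "ip_y Nx Ny hx hy (dy Nx Ny hy f) (dy Nx Ny hy g) = 0"
    unfolding ip_y_def using ip_y_sq_zero[OF gip_zero_parts(2)[OF assms]] by (intro sum.neutral ballI) auto
  ultimately show ?thesis by (simp add: gip_def)
qed

lemma gip_zero_const: assumes "gip f f = 0" "in_grid Nx Ny i j" shows "f i j = f 1 1"
proof -
  have x: "dx Nx Ny hx f i j = 0" if "1 \<le> i" "i \<le> Nx - 1" "1 \<le> j" "j \<le> Ny" for i j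
    using ip_x_sq_zero[OF gip_zero_parts(1)[OF assms(1)] that] .
  have y: "dy Nx Ny hy f i j = 0" if "1 \<le> i" "i \<le> Nx" "1 \<le> j" "j \<le> Ny - 1" for i j
    using ip_y_sq_zero[OF gip_zero_parts(2)[OF assms(1)] that] .
  have X: "\<forall>i. 1 \<le> i \<longrightarrow> i \<le> Nx \<longrightarrow> f i j = f 1 j" if "1 \<le> j" "j \<le> Ny" for j
  proof
    fix i show "1 \<le> i \<longrightarrow> i \<le> Nx \<longrightarrow> f i j = f 1 j"
    proof (induction i)
      case 0 then show ?case by simp
    next
      case (Suc i)
      show ?case
      proof (cases "i = 0")
        case True then show ?thesis by simp
      next
        case False
        show ?thesis
        proof (intro impI)
          assume "Suc i \<le> Nx"
          then have "hx * dx Nx Ny hx f i j = f (i+1) j - f i j" using dx_in[of i j f] False that by simp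
          then have "f (Suc i) j = f i j" using x[of i j] False that \<open>Suc i \<le> Nx\<close> by simp
          then show "f (Suc i) j = f 1 j" using Suc False \<open>Suc i \<le> Nx\<close> by simp
        qed
      qed
    qed
  qed
  have Y: "\<forall>j. 1 \<le> j \<longrightarrow> j \<le> Ny \<longrightarrow> f 1 j = f 1 1"
  proof
    fix j show "1 \<le> j \<longrightarrow> j \<le> Ny \<longrightarrow> f 1 j = f 1 1"
    proof (induction j)
      case 0 then show ?case by simp
    next
      case (Suc j)
      show ?case
      proof (cases "j = 0")
        case True then show ?thesis by simp
      next
        case False
        show ?thesis
        proof (intro impI)
          assume "Suc j \<le> Ny"
          then have "hy * dy Nx Ny hy f 1 j = f 1 (j+1) - f 1 j" using dy_in[of j 1 f] False Nx by simp
          then have "f 1 (Suc j) = f 1 j" using y[of 1 j] False Nx \<open>Suc j \<le> Ny\<close> by simp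
          then show "f 1 (Suc j) = f 1 1" using Suc False \<open>Suc j \<le> Ny\<close> by simp
        qed
      qed
    qed
  qed
  have ij: "1 \<le> i" "i \<le> Nx" "1 \<le> j" "j \<le> Ny" using assms(2) unfolding in_grid_def by auto
  have "f i j = f 1 j" using X[OF ij(3,4)] ij(1,2) by blast
  also have "\<dots> = f 1 1" using Y ij(3,4) by blast
  finally show ?thesis .
qed

lemma lap_kernel: assumes "\<And>i j. in_grid Nx Ny i j \<Longrightarrow> lap Nx Ny hx hy f i j = 0" "in_grid Nx Ny i j"
  shows "f i j = f 1 1"
proof -
  have "ip_m Nx Ny hx hy (lap Nx Ny hx hy f) f = ip_m Nx Ny hx hy (\<lambda>_ _. 0) f"
    by (rule ip_m_cong) (simp_all add: assms(1))
  then have "- gip f f = ip_m Nx Ny hx hy (\<lambda>_ _. 0) f" by (simp only: sbp')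
  then have "gip f f = 0" by (simp add: ip_m_def)
  then show ?thesis using gip_zero_const assms(2) by blast
qed

end

lemma inj_imp_surj_span:
  fixes s :: "'a::field \<Rightarrow> 'b::ab_group_add \<Rightarrow> 'b"
  assumes vs: "vector_space s" and lin: "Vector_Spaces.linear s s f" and fin: "finite B0"
    and into: "f ` module.span s B0 \<subseteq> module.span s B0"
    and inj: "inj_on f (module.span s B0)"
  shows "module.span s B0 \<subseteq> f ` module.span s B0"
proof -
  interpret vector_space s by (rule vs)
  interpret lf: Vector_Spaces.linear s s f by (rule lin)
  obtain B where B: "B \<subseteq> span B0" "independent B" "span B0 \<subseteq> span B" "card B = dim (span B0)"
    using basis_exists[of "span B0"] by blast
  have finB: "finite B" using independent_span_bound[OF fin B(2)] B(1) span_span by (metis)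
  have spB: "span B = span B0"
    using B(1,3) span_mono span_span by (metis subset_antisym)
  have injB: "inj_on f (span B)" using inj spB by simp
  have indf: "independent (f ` B)" using lf.independent_injective_image[OF B(2) injB] .
  have cardf: "card (f ` B) = card B"
    using card_image inj_on_subset[OF injB span_superset] by blast
  have fBsub: "f ` B \<subseteq> span B0" using into B(1) span_superset by blast
  have "span B0 \<subseteq> span (f ` B)"
  proof
    fix a assume a: "a \<in> span B0"
    show "a \<in> span (f ` B)"
    proof (rule ccontr)
      assume na: "a \<notin> span (f ` B)"
      have ind2: "independent (insert a (f ` B))" using independent_insertI[OF na indf] .
      have sub2: "insert a (f ` B) \<subseteq> span B" using a fBsub spB by auto
      have "card (insert a (f ` B)) \<le> card B" using independent_span_bound[OF finB ind2 sub2] by simp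
      moreover have "a \<notin> f ` B" using na span_superset by blast
      moreover have "finite (f ` B)" using finB by simp
      ultimately show False using cardf by simp
    qed
  qed
  also have "span (f ` B) = f ` span B" by (rule lf.span_image)
  finally show ?thesis using spB by simp
qed

definition sc :: "real \<Rightarrow> grid \<Rightarrow> grid" where "sc c f = (\<lambda>i j. c * f i j)"

lemma vs_sc: "vector_space sc"
  by unfold_locales (simp_all add: sc_def plus_fun_def fun_eq_iff algebra_simps)

lemma sum_apply2: "(sum F A) i j = (\<Sum>p\<in>A. F p i j)" for F :: "'c \<Rightarrow> grid"
proof (cases "finite A")
  case True then show ?thesis by (induction A rule: finite_induct) (simp_all add: plus_fun_def)
next
  case False then show ?thesis by simp
qed

definition delta :: "nat \<times> nat \<Rightarrow> grid" where
  "delta p = (\<lambda>i j. if (i, j) = p then 1 else 0)"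

lemma span_grid: "module.span sc (delta ` ({1..Nx}\<times>{1..Ny})) = {g. gridfun Nx Ny g}"
proof -
  interpret vector_space sc by (rule vs_sc)
  let ?B = "delta ` ({1..Nx}\<times>{1..Ny})"
  have sub: "subspace {g. gridfun Nx Ny g}"
    unfolding subspace_def gridfun_def by (auto simp: sc_def plus_fun_def)
  have "?B \<subseteq> {g. gridfun Nx Ny g}"
    by (auto simp: gridfun_def delta_def in_grid_def)
  then have 1: "span ?B \<subseteq> {g. gridfun Nx Ny g}" using span_minimal sub by blast
  have 2: "g \<in> span ?B" if g: "gridfun Nx Ny g" for g
  proof -
    have "g = (\<Sum>p\<in>{1..Nx}\<times>{1..Ny}. sc (g (fst p) (snd p)) (delta p))"
    proof (intro ext)
      fix i j
      have "(\<Sum>p\<in>{1..Nx}\<times>{1..Ny}. sc (g (fst p) (snd p)) (delta p)) i j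
          = (\<Sum>p\<in>{1..Nx}\<times>{1..Ny}. if p = (i, j) then g i j else 0)"
        unfolding sum_apply2 by (intro sum.cong refl) (auto simp: sc_def delta_def)
      also have "\<dots> = (if (i,j) \<in> {1..Nx}\<times>{1..Ny} then g i j else 0)"
        by (simp add: sum.delta)
      also have "\<dots> = g i j" using g by (auto simp: gridfun_def in_grid_def)
      finally show "g i j = (\<Sum>p\<in>{1..Nx}\<times>{1..Ny}. sc (g (fst p) (snd p)) (delta p)) i j" by simp
    qed
    also have "\<dots> \<in> span ?B"
      by (intro span_sum span_scale span_base) auto
    finally show ?thesis .
  qed
  show ?thesis using 1 2 by blast
qed

lemma grid_surj:
  assumes lin: "Vector_Spaces.linear sc sc f"
    and into: "\<And>g. gridfun Nx Ny g \<Longrightarrow> gridfun Nx Ny (f g)"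
    and ker: "\<And>g. gridfun Nx Ny g \<Longrightarrow> f g = 0 \<Longrightarrow> g = 0"
    and y: "gridfun Nx Ny y"
  shows "\<exists>x. gridfun Nx Ny x \<and> f x = y"
proof -
  interpret vector_space sc by (rule vs_sc)
  interpret lf: Vector_Spaces.linear sc sc f by (rule lin)
  let ?B = "delta ` ({1..Nx}\<times>{1..Ny})"
  have inj: "inj_on f (span ?B)"
  proof (rule inj_onI)
    fix x z assume "x \<in> span ?B" "z \<in> span ?B" "f x = f z"
    then have "x - z \<in> span ?B" "f (x - z) = 0" using span_diff lf.diff by auto
    then have "gridfun Nx Ny (x - z)" "f (x - z) = 0" using span_grid by auto
    then show "x = z" using ker[of "x - z"] by simp
  qed
  have "span ?B \<subseteq> f ` span ?B"
    by (rule inj_imp_surj_span[OF vs_sc lin _ _ inj]) (use into span_grid in auto)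
  then show ?thesis using y span_grid by auto
qed


lemma lap_add_fun: "lap Nx Ny hx hy (x + y) = (\<lambda>i j. lap Nx Ny hx hy x i j + lap Nx Ny hx hy y i j)"
proof -
  have "x + y = (\<lambda>i j. 1 * x i j + 1 * y i j)" by (simp add: plus_fun_def)
  then show ?thesis using lap_lin[of Nx Ny hx hy 1 x 1 y] by simp
qed

lemma lap_sc: "lap Nx Ny hx hy (sc c x) = sc c (lap Nx Ny hx hy x)"
proof -
  have "sc c x = (\<lambda>i j. c * x i j + 0 * x i j)" by (simp add: sc_def)
  then show ?thesis using lap_lin[of Nx Ny hx hy c x 0 x] by (simp add: sc_def)
qed

lemma lap_diff: "lap Nx Ny hx hy (\<lambda>i j. x i j - y i j) = (\<lambda>i j. lap Nx Ny hx hy x i j - lap Nx Ny hx hy y i j)"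
  using lap_lin[of Nx Ny hx hy 1 x "-1" y] by simp

lemma ip_m_lin_left: "ip_m Nx Ny hx hy (\<lambda>i j. a * f i j + b * g i j) k = a * ip_m Nx Ny hx hy f k + b * ip_m Nx Ny hx hy g k"
  by (simp add: ip_m_def sum.distrib sum_distrib_left algebra_simps)

lemma ip_m_const: "ip_m Nx Ny hx hy (\<lambda>_ _. c) (\<lambda>_ _. 1) = hx * hy * real Nx * real Ny * c"
  by (simp add: ip_m_def)

context G begin

lemma hpos: "hx * hy * real Nx * real Ny > 0" using hx hy Nx Ny by simp

lemma eta_unique:
  assumes "gridfun Nx Ny e1" "ip_m Nx Ny hx hy e1 (\<lambda>_ _. 1) = 0" "\<And>i j. in_grid Nx Ny i j \<Longrightarrow> - lap Nx Ny hx hy e1 i j = \<phi> i j"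
      and "gridfun Nx Ny e2" "ip_m Nx Ny hx hy e2 (\<lambda>_ _. 1) = 0" "\<And>i j. in_grid Nx Ny i j \<Longrightarrow> - lap Nx Ny hx hy e2 i j = \<phi> i j"
  shows "e1 = e2"
proof -
  let ?d = "\<lambda>i j. e1 i j - e2 i j"
  have l: "lap Nx Ny hx hy ?d i j = 0" if "in_grid Nx Ny i j" for i j
    using assms(3)[OF that] assms(6)[OF that] by (simp add: lap_diff)
  have c: "?d i j = ?d 1 1" if "in_grid Nx Ny i j" for i j using lap_kernel[of ?d, OF l that] by simp
  have "ip_m Nx Ny hx hy ?d (\<lambda>_ _. 1) = 0"
    using ip_m_lin_left[of Nx Ny hx hy 1 e1 "-1" e2] assms(2,5) by simp
  moreover have "ip_m Nx Ny hx hy ?d (\<lambda>_ _. 1) = ip_m Nx Ny hx hy (\<lambda>_ _. ?d 1 1) (\<lambda>_ _. 1)"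
    by (rule ip_m_cong) (use c in auto)
  ultimately have "?d 1 1 = 0" using ip_m_const hx hy Nx Ny by simp
  then have "?d i j = 0" if "in_grid Nx Ny i j" for i j using c that by simp
  then show ?thesis using assms(1,4) unfolding gridfun_def fun_eq_iff by (metis eq_iff_diff_eq_0)
qed

lemma eta_exists:
  assumes "ip_m Nx Ny hx hy \<phi> (\<lambda>_ _. 1) = 0"
  shows "\<exists>e. gridfun Nx Ny e \<and> ip_m Nx Ny hx hy e (\<lambda>_ _. 1) = 0 \<and> (\<forall>i j. in_grid Nx Ny i j \<longrightarrow> - lap Nx Ny hx hy e i j = \<phi> i j)"
proof -
  define T where "T = (\<lambda>e. mask Nx Ny (\<lambda>i j. - lap Nx Ny hx hy e i j + ip_m Nx Ny hx hy e (\<lambda>_ _. 1)))"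
  have lin: "Vector_Spaces.linear sc sc T"
    unfolding Vector_Spaces.linear_iff
  proof (intro conjI allI vs_sc)
    fix x y show "T (x + y) = T x + T y"
      unfolding T_def lap_add_fun using ip_m_add_left[of "x" "y"]
      by (auto simp: fun_eq_iff mask_def plus_fun_def ip_m_def sum.distrib algebra_simps)
  next
    fix c x show "T (sc c x) = sc c (T x)"
      unfolding T_def lap_sc
      by (auto simp: fun_eq_iff mask_def sc_def ip_m_def sum_distrib_left algebra_simps)
  qed
  have into: "gridfun Nx Ny (T g)" for g by (simp add: T_def gridfun_def mask_def)
  have ker: "g = 0" if g: "gridfun Nx Ny g" and T0: "T g = 0" for g
  proof -
    let ?m = "ip_m Nx Ny hx hy g (\<lambda>_ _. 1)"
    have eq: "- lap Nx Ny hx hy g i j + ?m = 0" if "in_grid Nx Ny i j" for i j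
      using fun_cong[OF fun_cong[OF T0, of i], of j] that by (simp add: T_def mask_def)
    have "ip_m Nx Ny hx hy (\<lambda>i j. (-1) * lap Nx Ny hx hy g i j + ?m * 1) (\<lambda>_ _. 1) = ip_m Nx Ny hx hy (\<lambda>_ _. 0) (\<lambda>_ _. 1)"
      by (rule ip_m_cong) (use eq in auto)
    then have "- ip_m Nx Ny hx hy (lap Nx Ny hx hy g) (\<lambda>_ _. 1) + ?m * ip_m Nx Ny hx hy (\<lambda>_ _. 1) (\<lambda>_ _. 1) = 0"
      by (subst (asm) ip_m_lin_left) (simp add: ip_m_def)
    then have "?m * (hx * hy * real Nx * real Ny) = 0" using lap_sum_zero ip_m_const[of Nx Ny hx hy 1] by simp
    then have m0: "?m = 0" using hx hy Nx Ny by simp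
    then have "lap Nx Ny hx hy g i j = 0" if "in_grid Nx Ny i j" for i j using eq[OF that] by simp
    then have c: "g i j = g 1 1" if "in_grid Nx Ny i j" for i j using lap_kernel that by blast
    have "?m = ip_m Nx Ny hx hy (\<lambda>_ _. g 1 1) (\<lambda>_ _. 1)" by (rule ip_m_cong) (use c in auto)
    then have "g 1 1 = 0" using m0 ip_m_const hx hy Nx Ny by simp
    then show ?thesis using c g by (auto simp: fun_eq_iff gridfun_def)
  qed
  obtain e where e: "gridfun Nx Ny e" "T e = mask Nx Ny \<phi>"
    using grid_surj[OF lin into ker] by (metis gridfun_def mask_def)
  let ?m = "ip_m Nx Ny hx hy e (\<lambda>_ _. 1)"
  have eq: "- lap Nx Ny hx hy e i j + ?m = \<phi> i j" if "in_grid Nx Ny i j" for i j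
    using fun_cong[OF fun_cong[OF e(2), of i], of j] that by (simp add: T_def mask_def)
  have "ip_m Nx Ny hx hy (\<lambda>i j. (-1) * lap Nx Ny hx hy e i j + ?m * 1) (\<lambda>_ _. 1) = ip_m Nx Ny hx hy \<phi> (\<lambda>_ _. 1)"
    by (rule ip_m_cong) (use eq in auto)
  then have "- ip_m Nx Ny hx hy (lap Nx Ny hx hy e) (\<lambda>_ _. 1) + ?m * ip_m Nx Ny hx hy (\<lambda>_ _. 1) (\<lambda>_ _. 1) = 0"
    using assms by (subst (asm) ip_m_lin_left) (simp add: ip_m_def)
  then have "?m * (hx * hy * real Nx * real Ny) = 0" using lap_sum_zero ip_m_const[of Nx Ny hx hy 1] by simp
  then have m0: "?m = 0" using hx hy Nx Ny by simp
  show ?thesis using e(1) m0 eq by (intro exI[of _ e]) simp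
qed

lemma eta_prop:
  assumes "ip_m Nx Ny hx hy \<phi> (\<lambda>_ _. 1) = 0"
  shows "gridfun Nx Ny (eta Nx Ny hx hy \<phi>)" "ip_m Nx Ny hx hy (eta Nx Ny hx hy \<phi>) (\<lambda>_ _. 1) = 0"
    "\<And>i j. in_grid Nx Ny i j \<Longrightarrow> - lap Nx Ny hx hy (eta Nx Ny hx hy \<phi>) i j = \<phi> i j"
proof -
  have ex: "\<exists>!e. gridfun Nx Ny e \<and> ip_m Nx Ny hx hy e (\<lambda>_ _. 1) = 0 \<and> (\<forall>i j. in_grid Nx Ny i j \<longrightarrow> - lap Nx Ny hx hy e i j = \<phi> i j)"
    using eta_exists[OF assms] eta_unique by blast
  have "gridfun Nx Ny (eta Nx Ny hx hy \<phi>) \<and> ip_m Nx Ny hx hy (eta Nx Ny hx hy \<phi>) (\<lambda>_ _. 1) = 0 \<and> (\<forall>i j. in_grid Nx Ny i j \<longrightarrow> - lap Nx Ny hx hy (eta Nx Ny hx hy \<phi>) i j = \<phi> i j)"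
    unfolding eta_def by (rule theI'[OF ex])
  then show "gridfun Nx Ny (eta Nx Ny hx hy \<phi>)" "ip_m Nx Ny hx hy (eta Nx Ny hx hy \<phi>) (\<lambda>_ _. 1) = 0"
    "\<And>i j. in_grid Nx Ny i j \<Longrightarrow> - lap Nx Ny hx hy (eta Nx Ny hx hy \<phi>) i j = \<phi> i j" by auto
qed

lemma eta_char:
  assumes "gridfun Nx Ny e" "ip_m Nx Ny hx hy e (\<lambda>_ _. 1) = 0" "\<And>i j. in_grid Nx Ny i j \<Longrightarrow> - lap Nx Ny hx hy e i j = \<phi> i j"
  shows "eta Nx Ny hx hy \<phi> = e"
  unfolding eta_def
  by (rule the_equality) (use assms eta_unique in blast)+

end

lemma dx_lin: "dx Nx Ny hx (\<lambda>i j. a * f i j + b * g i j) = (\<lambda>i j. a * dx Nx Ny hx f i j + b * dx Nx Ny hx g i j)"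
  by (simp add: dx_def ext_def fun_eq_iff add_divide_distrib diff_divide_distrib algebra_simps)
lemma dy_lin: "dy Nx Ny hy (\<lambda>i j. a * f i j + b * g i j) = (\<lambda>i j. a * dy Nx Ny hy f i j + b * dy Nx Ny hy g i j)"
  by (simp add: dy_def ext_def fun_eq_iff add_divide_distrib diff_divide_distrib algebra_simps)

lemma grad_comb_x:
  fixes a b c :: grid
  shows "2 * ip_x Nx Ny hx hy (\<lambda>i j. (3 * b i j - c i j) / 2) (\<lambda>i j. a i j - b i j)
     - ip_x Nx Ny hx hy a a + ip_x Nx Ny hx hy b b
     + 1/2 * ip_x Nx Ny hx hy (\<lambda>i j. a i j - b i j) (\<lambda>i j. a i j - b i j)
     - 1/2 * ip_x Nx Ny hx hy (\<lambda>i j. b i j - c i j) (\<lambda>i j. b i j - c i j)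
   = - 1/2 * ip_x Nx Ny hx hy (\<lambda>i j. a i j - 2 * b i j + c i j) (\<lambda>i j. a i j - 2 * b i j + c i j)"
  unfolding ip_x_def
  apply (simp add: sum_distrib_left sum.distrib[symmetric] sum_subtractf[symmetric] power2_eq_square algebra_simps)
  apply (intro sum.cong refl)
  apply (simp add: field_simps)
  done

lemma grad_comb_y:
  fixes a b c :: grid
  shows "2 * ip_y Nx Ny hx hy (\<lambda>i j. (3 * b i j - c i j) / 2) (\<lambda>i j. a i j - b i j)
     - ip_y Nx Ny hx hy a a + ip_y Nx Ny hx hy b b
     + 1/2 * ip_y Nx Ny hx hy (\<lambda>i j. a i j - b i j) (\<lambda>i j. a i j - b i j)
     - 1/2 * ip_y Nx Ny hx hy (\<lambda>i j. b i j - c i j) (\<lambda>i j. b i j - c i j)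
   = - 1/2 * ip_y Nx Ny hx hy (\<lambda>i j. a i j - 2 * b i j + c i j) (\<lambda>i j. a i j - 2 * b i j + c i j)"
  unfolding ip_y_def
  apply (simp add: sum_distrib_left sum.distrib[symmetric] sum_subtractf[symmetric] power2_eq_square algebra_simps)
  apply (intro sum.cong refl)
  apply (simp add: field_simps)
  done

context G begin

lemma ip_x_sq_nonneg: "ip_x Nx Ny hx hy f f \<ge> 0"
  unfolding ip_x_def by (intro sum_nonneg sq_nn)
lemma ip_y_sq_nonneg: "ip_y Nx Ny hx hy f f \<ge> 0"
  unfolding ip_y_def by (intro sum_nonneg sq_nn)
lemma ip_m_sq_nonneg: "ip_m Nx Ny hx hy f f \<ge> 0"
  unfolding ip_m_def by (intro sum_nonneg sq_nn)

lemma grad_ineq: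
  fixes Z1 Z0 Zm :: grid
  shows "2 * gip (\<lambda>i j. (3 * Z0 i j - Zm i j) / 2) (\<lambda>i j. Z1 i j - Z0 i j)
     - grad_norm2 Nx Ny hx hy Z1 + grad_norm2 Nx Ny hx hy Z0
     + 1/2 * grad_diff_norm2 Nx Ny hx hy Z1 Z0 - 1/2 * grad_diff_norm2 Nx Ny hx hy Z0 Zm \<le> 0"
proof -
  have dxt: "dx Nx Ny hx (\<lambda>i j. (3 * Z0 i j - Zm i j) / 2) = (\<lambda>i j. (3 * dx Nx Ny hx Z0 i j - dx Nx Ny hx Zm i j) / 2)"
    using dx_lin[of Nx Ny hx "3/2" Z0 "-1/2" Zm] by (simp add: diff_divide_distrib)
  have dxu: "dx Nx Ny hx (\<lambda>i j. Z1 i j - Z0 i j) = (\<lambda>i j. dx Nx Ny hx Z1 i j - dx Nx Ny hx Z0 i j)"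
    using dx_lin[of Nx Ny hx 1 Z1 "-1" Z0] by simp
  have dyt: "dy Nx Ny hy (\<lambda>i j. (3 * Z0 i j - Zm i j) / 2) = (\<lambda>i j. (3 * dy Nx Ny hy Z0 i j - dy Nx Ny hy Zm i j) / 2)"
    using dy_lin[of Nx Ny hy "3/2" Z0 "-1/2" Zm] by (simp add: diff_divide_distrib)
  have dyu: "dy Nx Ny hy (\<lambda>i j. Z1 i j - Z0 i j) = (\<lambda>i j. dy Nx Ny hy Z1 i j - dy Nx Ny hy Z0 i j)"
    using dy_lin[of Nx Ny hy 1 Z1 "-1" Z0] by simp
  have "2 * gip (\<lambda>i j. (3 * Z0 i j - Zm i j) / 2) (\<lambda>i j. Z1 i j - Z0 i j)
     - grad_norm2 Nx Ny hx hy Z1 + grad_norm2 Nx Ny hx hy Z0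
     + 1/2 * grad_diff_norm2 Nx Ny hx hy Z1 Z0 - 1/2 * grad_diff_norm2 Nx Ny hx hy Z0 Zm
     = (- 1/2 * ip_x Nx Ny hx hy (\<lambda>i j. dx Nx Ny hx Z1 i j - 2 * dx Nx Ny hx Z0 i j + dx Nx Ny hx Zm i j) (\<lambda>i j. dx Nx Ny hx Z1 i j - 2 * dx Nx Ny hx Z0 i j + dx Nx Ny hx Zm i j))
     + (- 1/2 * ip_y Nx Ny hx hy (\<lambda>i j. dy Nx Ny hy Z1 i j - 2 * dy Nx Ny hy Z0 i j + dy Nx Ny hy Zm i j) (\<lambda>i j. dy Nx Ny hy Z1 i j - 2 * dy Nx Ny hy Z0 i j + dy Nx Ny hy Zm i j))"
    unfolding gip_def grad_norm2_def grad_diff_norm2_def dxt dxu dyt dyu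
      grad_comb_x[symmetric] grad_comb_y[symmetric]
    by (simp add: algebra_simps)
  also have "\<dots> \<le> 0"
    by (intro add_nonpos_nonpos) (simp_all add: ip_x_sq_nonneg ip_y_sq_nonneg)
  finally show ?thesis .
qed

end


lemma ip_m_lin_right: "ip_m Nx Ny hx hy k (\<lambda>i j. a * f i j + b * g i j) = a * ip_m Nx Ny hx hy k f + b * ip_m Nx Ny hx hy k g"
  by (simp add: ip_m_def sum.distrib sum_distrib_left algebra_simps)

lemma ip_m_halfdiff: "ip_m Nx Ny hx hy (\<lambda>i j. (a i j + b i j) / 2) (\<lambda>i j. a i j - b i j)
   = (ip_m Nx Ny hx hy a a - ip_m Nx Ny hx hy b b) / 2"
  unfolding ip_m_def
  by (simp add: sum_distrib_left sum_subtractf[symmetric] sum_divide_distrib algebra_simps)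

context G begin

lemma ip_m_sq_zero: assumes "ip_m Nx Ny hx hy f f = 0" "in_grid Nx Ny i j"
  shows "f i j = 0"
proof -
  have nn: "\<And>i j. 0 \<le> hx * hy * f i j * f i j" by (rule sq_nn)
  have "\<forall>i\<in>{1..Nx}. (\<Sum>j\<in>{1..Ny}. hx * hy * f i j * f i j) = 0"
    using assms(1) unfolding ip_m_def by (subst sum_nonneg_eq_0_iff[symmetric]) (auto intro: sum_nonneg nn)
  then have "(\<Sum>j\<in>{1..Ny}. hx * hy * f i j * f i j) = 0" using assms by (auto simp: in_grid_def)
  then have "hx * hy * f i j * f i j = 0" using assms
    by (subst (asm) sum_nonneg_eq_0_iff) (auto intro: nn simp: in_grid_def)
  then show ?thesis using hx hy by (metis mult_eq_0_iff order_less_irrefl)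
qed

lemma ip_m_eta: assumes "ip_m Nx Ny hx hy \<phi> (\<lambda>_ _. 1) = 0"
  shows "ip_m Nx Ny hx hy \<phi> e = gip (eta Nx Ny hx hy \<phi>) e"
proof -
  have "ip_m Nx Ny hx hy \<phi> e = ip_m Nx Ny hx hy (\<lambda>i j. (-1) * lap Nx Ny hx hy (eta Nx Ny hx hy \<phi>) i j + 0 * \<phi> i j) e"
    by (rule ip_m_cong) (use eta_prop(3)[OF assms] in auto)
  also have "\<dots> = (-1) * ip_m Nx Ny hx hy (lap Nx Ny hx hy (eta Nx Ny hx hy \<phi>)) e + 0 * ip_m Nx Ny hx hy \<phi> e"
    by (rule ip_m_lin_left)
  also have "\<dots> = gip (eta Nx Ny hx hy \<phi>) e" by (simp add: sbp')
  finally show ?thesis .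
qed

lemma ip_neg1_gip: "ip_neg1 Nx Ny hx hy a b = gip (eta Nx Ny hx hy a) (eta Nx Ny hx hy b)"
  by (simp add: ip_neg1_def gip_def)

lemma norm_neg1_sq: "(norm_neg1 Nx Ny hx hy a)^2 = gip (eta Nx Ny hx hy a) (eta Nx Ny hx hy a)"
  using gip_nonneg by (simp add: norm_neg1_def ip_neg1_gip)

lemma core_inj:
  fixes c K \<alpha> E :: real and g d :: grid
  assumes c: "c > 0" and K: "K > 0" and \<alpha>: "\<alpha> \<ge> 0" and E: "E > 0" and d: "gridfun Nx Ny d"
    and eq: "\<And>i j. in_grid Nx Ny i j \<Longrightarrow> c * d i j = K * lap Nx Ny hx hy
        (\<lambda>i j. lap Nx Ny hx hy (lap Nx Ny hx hy d) i j / 2 + \<alpha> / 2 * d i j + ip_m Nx Ny hx hy g d / (4 * E) * g i j) i j"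
  shows "d = 0"
proof -
  define A where "A = (\<lambda>i j. lap Nx Ny hx hy (lap Nx Ny hx hy d) i j / 2 + \<alpha> / 2 * d i j + ip_m Nx Ny hx hy g d / (4 * E) * g i j)"
  have "ip_m Nx Ny hx hy d A = ip_m Nx Ny hx hy d (\<lambda>i j. (1/2) * lap Nx Ny hx hy (lap Nx Ny hx hy d) i j + 1 * (\<alpha> / 2 * d i j + ip_m Nx Ny hx hy g d / (4 * E) * g i j))"
    unfolding A_def by (simp add: algebra_simps)
  also have "\<dots> = 1/2 * ip_m Nx Ny hx hy d (lap Nx Ny hx hy (lap Nx Ny hx hy d)) + 1 * ip_m Nx Ny hx hy d (\<lambda>i j. \<alpha> / 2 * d i j + ip_m Nx Ny hx hy g d / (4 * E) * g i j)"
    by (rule ip_m_lin_right)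
  also have "ip_m Nx Ny hx hy d (\<lambda>i j. \<alpha> / 2 * d i j + ip_m Nx Ny hx hy g d / (4 * E) * g i j) = \<alpha>/2 * ip_m Nx Ny hx hy d d + ip_m Nx Ny hx hy g d / (4 * E) * ip_m Nx Ny hx hy d g"
    by (rule ip_m_lin_right)
  finally have Aeq: "ip_m Nx Ny hx hy d A = 1/2 * ip_m Nx Ny hx hy (lap Nx Ny hx hy d) (lap Nx Ny hx hy d) + (\<alpha>/2 * ip_m Nx Ny hx hy d d + (ip_m Nx Ny hx hy g d)^2 / (4 * E))"
    by (simp add: lap_sym[symmetric] ip_m_comm[of d g] ip_m_comm[of d "lap Nx Ny hx hy (lap Nx Ny hx hy d)"] power2_eq_square)
  have A0: "ip_m Nx Ny hx hy d A \<ge> 0"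
    unfolding Aeq using \<alpha> E ip_m_sq_nonneg by (intro add_nonneg_nonneg mult_nonneg_nonneg divide_nonneg_pos) auto
  have "c * ip_m Nx Ny hx hy d A = ip_m Nx Ny hx hy (\<lambda>i j. c * d i j + 0 * d i j) A"
    using ip_m_lin_left[of Nx Ny hx hy c d 0 d A] by simp
  also have "\<dots> = ip_m Nx Ny hx hy (\<lambda>i j. K * lap Nx Ny hx hy A i j + 0 * d i j) A"
    by (rule ip_m_cong) (use eq in \<open>simp_all add: A_def\<close>)
  also have "\<dots> = - K * gip A A" using ip_m_lin_left[of Nx Ny hx hy K "lap Nx Ny hx hy A" 0 d A] by (simp add: sbp')
  finally have "c * ip_m Nx Ny hx hy d A = - K * gip A A" .
  moreover have "c * ip_m Nx Ny hx hy d A \<ge> 0" using A0 c by simp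
  moreover have "K * gip A A \<ge> 0" using gip_nonneg[of A] K by simp
  ultimately have "K * gip A A = 0" by linarith
  then have gA: "gip A A = 0" using K by simp
  have "ip_m Nx Ny hx hy (lap Nx Ny hx hy A) (lap Nx Ny hx hy A) = 0"
    using gip_zero_left[OF gA] by (simp add: sbp')
  then have lA: "lap Nx Ny hx hy A i j = 0" if "in_grid Nx Ny i j" for i j using ip_m_sq_zero that by blast
  have "d i j = 0" for i j
  proof (cases "in_grid Nx Ny i j")
    case True
    have "c * d i j = K * lap Nx Ny hx hy A i j" using eq[OF True] unfolding A_def .
    then show ?thesis using lA[OF True] c by simp
  next
    case False then show ?thesis using d by (simp add: gridfun_def)
  qed
  then show ?thesis by (simp add: fun_eq_iff)
qed

end

lemma ip_m_lin4_left: "ip_m Nx Ny hx hy (\<lambda>i j. a * f1 i j + b * f2 i j + c * f3 i j + d * f4 i j) k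
  = a * ip_m Nx Ny hx hy f1 k + b * ip_m Nx Ny hx hy f2 k + c * ip_m Nx Ny hx hy f3 k + d * ip_m Nx Ny hx hy f4 k"
  by (simp add: ip_m_def sum.distrib sum_distrib_left algebra_simps)

lemma ip_m_scale_left: "ip_m Nx Ny hx hy (\<lambda>i j. a * f i j) k = a * ip_m Nx Ny hx hy f k"
  by (simp add: ip_m_def sum_distrib_left algebra_simps)

lemma ip_m_scale_right: "ip_m Nx Ny hx hy k (\<lambda>i j. a * f i j) = a * ip_m Nx Ny hx hy k f"
  by (simp add: ip_m_def sum_distrib_left algebra_simps)

context G begin

lemma energy_part:
  fixes M \<beta> \<alpha> dt R0 R1 :: real and Zm Z0 Psi0 Z1 Psi1 W :: grid
  assumes M: "M > 0" and \<beta>: "\<beta> > 0" and \<alpha>: "\<alpha> \<ge> 0" and dt: "dt > 0"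
    and Epos: "E1h Nx Ny hx hy (\<lambda>i j. (3 * Z0 i j - Zm i j) / 2) > 0"
    and gZ1: "gridfun Nx Ny Z1" and gP1: "gridfun Nx Ny Psi1" and gW: "gridfun Nx Ny W"
    and sch: "scheme Nx Ny hx hy M \<beta> \<alpha> dt Zm Z0 Psi0 R0 Z1 Psi1 W R1"
    and P0: "ip_m Nx Ny hx hy Psi0 (\<lambda>_ _. 1) = 0"
  shows "ip_m Nx Ny hx hy Psi1 (\<lambda>_ _. 1) = 0
            \<and> ip_m Nx Ny hx hy Z1 (\<lambda>_ _. 1) = ip_m Nx Ny hx hy Z0 (\<lambda>_ _. 1)
            \<and> Ed_tilde Nx Ny hx hy \<alpha> M Z1 Z0 R1 Psi1 - Ed_tilde Nx Ny hx hy \<alpha> M Z0 Zm R0 Psi0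
                \<le> - (\<beta> / M) * dt *
                   (norm_neg1 Nx Ny hx hy (\<lambda>i j. (Psi1 i j + Psi0 i j) / 2))^2"
proof -
  define Zt where "Zt = (\<lambda>i j. (3 * Z0 i j - Zm i j) / 2)"
  define E where "E = E1h Nx Ny hx hy Zt"
  define g where "g = (\<lambda>i j. dFpot (Zt i j))"
  define u where "u = (\<lambda>i j. Z1 i j - Z0 i j)"
  define Ph where "Ph = (\<lambda>i j. (Psi1 i j + Psi0 i j) / 2)"
  define Zh where "Zh = (\<lambda>i j. (Z1 i j + Z0 i j) / 2)"
  define Rh where "Rh = (R1 + R0) / 2"
  have E: "E > 0" using Epos by (simp add: E_def Zt_def)
  have eq1: "Psi1 i j - Psi0 i j + \<beta> * dt * ((Psi1 i j + Psi0 i j) / 2) = M * dt * lap Nx Ny hx hy W i j"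
    if "in_grid Nx Ny i j" for i j
    using sch that unfolding scheme_def Let_def by auto
  have eq2: "dt * ((Psi1 i j + Psi0 i j) / 2) = Z1 i j - Z0 i j"
    if "in_grid Nx Ny i j" for i j
    using sch that unfolding scheme_def Let_def by auto
  have eqW: "W i j = lap Nx Ny hx hy (lap Nx Ny hx hy Zh) i j + 2 * lap Nx Ny hx hy Zt i j + \<alpha> * Zh i j + Rh / sqrt E * g i j"
    if "in_grid Nx Ny i j" for i j
    using sch that unfolding scheme_def Let_def Zh_def Zt_def Rh_def E_def g_def by auto
  have eqR: "R1 - R0 = 1 / (2 * sqrt E) * ip_m Nx Ny hx hy g u"
    using sch unfolding scheme_def Let_def Zt_def E_def g_def u_def by auto
  have "(1 + \<beta>*dt/2) * ip_m Nx Ny hx hy Psi1 (\<lambda>_ _. 1) + (\<beta>*dt/2 - 1) * ip_m Nx Ny hx hy Psi0 (\<lambda>_ _. 1)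
      = ip_m Nx Ny hx hy (\<lambda>i j. (1 + \<beta>*dt/2) * Psi1 i j + (\<beta>*dt/2 - 1) * Psi0 i j) (\<lambda>_ _. 1)"
    by (rule ip_m_lin_left[symmetric])
  also have "\<dots> = ip_m Nx Ny hx hy (\<lambda>i j. (M*dt) * lap Nx Ny hx hy W i j) (\<lambda>_ _. 1)"
    apply (rule ip_m_cong)
    subgoal for i j using eq1[of i j] by (simp add: field_simps)
    by simp
  also have "\<dots> = 0" by (simp add: ip_m_scale_left lap_sum_zero)
  moreover have "1 + \<beta>*dt/2 > 0" using \<beta> dt by (simp add: add_pos_pos)
  ultimately have P1: "ip_m Nx Ny hx hy Psi1 (\<lambda>_ _. 1) = 0" using P0 by simp
  have "ip_m Nx Ny hx hy Z1 (\<lambda>_ _. 1) - ip_m Nx Ny hx hy Z0 (\<lambda>_ _. 1)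
      = ip_m Nx Ny hx hy (\<lambda>i j. 1 * Z1 i j + (-1) * Z0 i j) (\<lambda>_ _. 1)"
    by (subst ip_m_lin_left) simp
  also have "\<dots> = ip_m Nx Ny hx hy (\<lambda>i j. (dt/2) * Psi1 i j + (dt/2) * Psi0 i j) (\<lambda>_ _. 1)"
    apply (rule ip_m_cong)
    subgoal for i j using eq2[of i j] dt by (simp add: field_simps)
    by simp
  also have "\<dots> = 0" by (subst ip_m_lin_left) (simp add: P0 P1)
  finally have mass: "ip_m Nx Ny hx hy Z1 (\<lambda>_ _. 1) = ip_m Nx Ny hx hy Z0 (\<lambda>_ _. 1)" by simp
  define e0 where "e0 = eta Nx Ny hx hy Psi0"
  define e1 where "e1 = eta Nx Ny hx hy Psi1"
  have Phm: "ip_m Nx Ny hx hy Ph (\<lambda>_ _. 1) = 0"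
  proof -
    have "ip_m Nx Ny hx hy Ph (\<lambda>_ _. 1) = ip_m Nx Ny hx hy (\<lambda>i j. (1/2) * Psi1 i j + (1/2) * Psi0 i j) (\<lambda>_ _. 1)"
      unfolding Ph_def by (simp add: add_divide_distrib)
    also have "\<dots> = 0" by (subst ip_m_lin_left) (simp add: P0 P1)
    finally show ?thesis .
  qed
  define eh where "eh = (\<lambda>i j. (1/2) * e1 i j + (1/2) * e0 i j)"
  have eh: "eta Nx Ny hx hy Ph = eh"
  proof (rule eta_char)
    show "gridfun Nx Ny eh" using eta_prop(1)[OF P0] eta_prop(1)[OF P1]
      by (simp add: eh_def e0_def e1_def gridfun_def)
    show "ip_m Nx Ny hx hy eh (\<lambda>_ _. 1) = 0" unfolding eh_def
      by (subst ip_m_lin_left) (simp add: e0_def e1_def eta_prop(2)[OF P0] eta_prop(2)[OF P1])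
    fix i j assume ij: "in_grid Nx Ny i j"
    show "- lap Nx Ny hx hy eh i j = Ph i j" unfolding eh_def lap_lin
      using eta_prop(3)[OF P0 ij] eta_prop(3)[OF P1 ij] by (simp add: e0_def e1_def Ph_def field_simps)
  qed
  have Q: "ip_m Nx Ny hx hy Psi1 eh - ip_m Nx Ny hx hy Psi0 eh = (gip e1 e1 - gip e0 e0) / 2"
  proof -
    have "ip_m Nx Ny hx hy Psi1 eh = 1/2 * gip e1 e1 + 1/2 * gip e1 e0"
      unfolding eh_def by (subst ip_m_lin_right) (simp add: ip_m_eta[OF P1] e1_def)
    moreover have "ip_m Nx Ny hx hy Psi0 eh = 1/2 * gip e0 e1 + 1/2 * gip e0 e0"
      unfolding eh_def by (subst ip_m_lin_right) (simp add: ip_m_eta[OF P0] e0_def)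
    ultimately show ?thesis using gip_comm[of e1 e0] by simp
  qed
  have Qh: "ip_m Nx Ny hx hy Ph eh = gip eh eh" using ip_m_eta[OF Phm] eh by simp
  have Wu: "ip_m Nx Ny hx hy W u = dt * ip_m Nx Ny hx hy W Ph"
  proof -
    have "ip_m Nx Ny hx hy W u = ip_m Nx Ny hx hy W (\<lambda>i j. dt * Ph i j)"
      by (rule ip_m_cong) (use eq2 in \<open>auto simp: u_def Ph_def\<close>)
    then show ?thesis by (simp add: ip_m_scale_right)
  qed
  have psi_id: "(gip e1 e1 - gip e0 e0) / 2 + \<beta> * dt * gip eh eh = - M * ip_m Nx Ny hx hy W u"
  proof -
    have "(gip e1 e1 - gip e0 e0) / 2 + \<beta> * dt * gip eh eh
       = 1 * (ip_m Nx Ny hx hy Psi1 eh - ip_m Nx Ny hx hy Psi0 eh) + (\<beta> * dt) * ip_m Nx Ny hx hy Ph eh"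
      using Q Qh by simp
    also have "ip_m Nx Ny hx hy Psi1 eh - ip_m Nx Ny hx hy Psi0 eh = ip_m Nx Ny hx hy (\<lambda>i j. Psi1 i j - Psi0 i j) eh"
      using ip_m_lin_left[of Nx Ny hx hy 1 Psi1 "-1" Psi0 eh] by simp
    also have "1 * ip_m Nx Ny hx hy (\<lambda>i j. Psi1 i j - Psi0 i j) eh + (\<beta> * dt) * ip_m Nx Ny hx hy Ph eh
        = ip_m Nx Ny hx hy (\<lambda>i j. 1 * (Psi1 i j - Psi0 i j) + (\<beta> * dt) * Ph i j) eh"
      by (rule ip_m_lin_left[symmetric])
    also have "\<dots> = ip_m Nx Ny hx hy (\<lambda>i j. (M * dt) * lap Nx Ny hx hy W i j) eh"
      by (rule ip_m_cong) (use eq1 in \<open>auto simp: Ph_def\<close>)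
    also have "\<dots> = (M * dt) * ip_m Nx Ny hx hy W (lap Nx Ny hx hy eh)"
      by (simp add: ip_m_scale_left lap_sym)
    also have "ip_m Nx Ny hx hy W (lap Nx Ny hx hy eh) = ip_m Nx Ny hx hy W (\<lambda>i j. (-1) * Ph i j)"
      apply (rule ip_m_cong)
       apply simp
      subgoal for i j using eta_prop(3)[OF Phm, of i j] eh by simp
      done
    also have "\<dots> = - ip_m Nx Ny hx hy W Ph" by (subst ip_m_scale_right) simp
    finally show ?thesis using Wu by simp
  qed
  have lZh: "lap Nx Ny hx hy Zh = (\<lambda>i j. (lap Nx Ny hx hy Z1 i j + lap Nx Ny hx hy Z0 i j) / 2)"
  proof -
    have "Zh = (\<lambda>i j. 1/2 * Z1 i j + 1/2 * Z0 i j)" by (simp add: Zh_def fun_eq_iff add_divide_distrib)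
    then have "lap Nx Ny hx hy Zh = (\<lambda>i j. 1/2 * lap Nx Ny hx hy Z1 i j + 1/2 * lap Nx Ny hx hy Z0 i j)"
      using lap_lin[of Nx Ny hx hy "1/2" Z1 "1/2" Z0] by simp
    then show ?thesis by (simp add: fun_eq_iff add_divide_distrib)
  qed
  have lu: "lap Nx Ny hx hy u = (\<lambda>i j. lap Nx Ny hx hy Z1 i j - lap Nx Ny hx hy Z0 i j)"
    unfolding u_def by (rule lap_diff)
  have gu: "ip_m Nx Ny hx hy g u = 2 * sqrt E * (R1 - R0)" using eqR E by (simp add: field_simps)
  have Wid: "ip_m Nx Ny hx hy W u = (norm_m2 Nx Ny hx hy (lap Nx Ny hx hy Z1) - norm_m2 Nx Ny hx hy (lap Nx Ny hx hy Z0)) / 2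
      - 2 * gip Zt u + \<alpha> * ((norm_m2 Nx Ny hx hy Z1 - norm_m2 Nx Ny hx hy Z0) / 2) + (R1^2 - R0^2)"
  proof -
    have "ip_m Nx Ny hx hy W u = ip_m Nx Ny hx hy (\<lambda>i j. 1 * lap Nx Ny hx hy (lap Nx Ny hx hy Zh) i j + 2 * lap Nx Ny hx hy Zt i j + \<alpha> * Zh i j + (Rh / sqrt E) * g i j) u"
      by (rule ip_m_cong) (use eqW in auto)
    also have "\<dots> = 1 * ip_m Nx Ny hx hy (lap Nx Ny hx hy (lap Nx Ny hx hy Zh)) u + 2 * ip_m Nx Ny hx hy (lap Nx Ny hx hy Zt) u
        + \<alpha> * ip_m Nx Ny hx hy Zh u + (Rh / sqrt E) * ip_m Nx Ny hx hy g u"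
      by (rule ip_m_lin4_left)
    also have "ip_m Nx Ny hx hy (lap Nx Ny hx hy (lap Nx Ny hx hy Zh)) u = ip_m Nx Ny hx hy (lap Nx Ny hx hy Zh) (lap Nx Ny hx hy u)"
      by (rule lap_sym)
    also have "\<dots> = (norm_m2 Nx Ny hx hy (lap Nx Ny hx hy Z1) - norm_m2 Nx Ny hx hy (lap Nx Ny hx hy Z0)) / 2"
      unfolding lZh lu norm_m2_def by (rule ip_m_halfdiff)
    also have "ip_m Nx Ny hx hy (lap Nx Ny hx hy Zt) u = - gip Zt u" by (rule sbp')
    also have "ip_m Nx Ny hx hy Zh u = (norm_m2 Nx Ny hx hy Z1 - norm_m2 Nx Ny hx hy Z0) / 2"
      unfolding Zh_def u_def norm_m2_def by (rule ip_m_halfdiff)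
    also have "(Rh / sqrt E) * ip_m Nx Ny hx hy g u = R1^2 - R0^2"
      unfolding gu Rh_def using E by (simp add: field_simps power2_eq_square)
    finally show ?thesis by simp
  qed
  have gi: "2 * gip Zt u - grad_norm2 Nx Ny hx hy Z1 + grad_norm2 Nx Ny hx hy Z0
     + 1/2 * grad_diff_norm2 Nx Ny hx hy Z1 Z0 - 1/2 * grad_diff_norm2 Nx Ny hx hy Z0 Zm \<le> 0"
    unfolding Zt_def u_def by (rule grad_ineq)
  have n1: "(norm_neg1 Nx Ny hx hy Psi1)^2 = gip e1 e1" by (simp add: norm_neg1_sq e1_def)
  have n0: "(norm_neg1 Nx Ny hx hy Psi0)^2 = gip e0 e0" by (simp add: norm_neg1_sq e0_def)
  have nh: "(norm_neg1 Nx Ny hx hy (\<lambda>i j. (Psi1 i j + Psi0 i j) / 2))^2 = gip eh eh"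
    using norm_neg1_sq[of Ph] eh by (simp add: Ph_def)
  have psi': "gip e1 e1 / (2*M) - gip e0 e0 / (2*M) = - ip_m Nx Ny hx hy W u - \<beta> / M * dt * gip eh eh"
  proof -
    have a: "gip e1 e1 - gip e0 e0 = - 2 * M * ip_m Nx Ny hx hy W u - 2 * \<beta> * dt * gip eh eh"
    proof -
      have "(gip e1 e1 - gip e0 e0) / 2 = - M * ip_m Nx Ny hx hy W u - \<beta> * dt * gip eh eh"
        using psi_id by linarith
      then have "gip e1 e1 - gip e0 e0 = 2 * (- M * ip_m Nx Ny hx hy W u - \<beta> * dt * gip eh eh)" by simp
      then show ?thesis by (simp add: algebra_simps)
    qed
    have "gip e1 e1 / (2*M) - gip e0 e0 / (2*M) = (gip e1 e1 - gip e0 e0) / (2*M)" by (simp add: diff_divide_distrib)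
    also have "\<dots> = (- 2 * M * ip_m Nx Ny hx hy W u - 2 * \<beta> * dt * gip eh eh) / (2*M)" by (simp only: a)
    also have "\<dots> = - ip_m Nx Ny hx hy W u - \<beta> / M * dt * gip eh eh" using M by (simp add: field_simps)
    finally show ?thesis .
  qed
  have "Ed_tilde Nx Ny hx hy \<alpha> M Z1 Z0 R1 Psi1 - Ed_tilde Nx Ny hx hy \<alpha> M Z0 Zm R0 Psi0
      = 1/2 * norm_m2 Nx Ny hx hy (lap Nx Ny hx hy Z1) - grad_norm2 Nx Ny hx hy Z1 + \<alpha>/2 * norm_m2 Nx Ny hx hy Z1 + R1^2
        + gip e1 e1 / (2*M) + 1/2 * grad_diff_norm2 Nx Ny hx hy Z1 Z0
      - (1/2 * norm_m2 Nx Ny hx hy (lap Nx Ny hx hy Z0) - grad_norm2 Nx Ny hx hy Z0 + \<alpha>/2 * norm_m2 Nx Ny hx hy Z0 + R0^2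
        + gip e0 e0 / (2*M) + 1/2 * grad_diff_norm2 Nx Ny hx hy Z0 Zm)"
    unfolding Ed_tilde_def Ed_def n1 n0 by simp
  also have "\<dots> = (norm_m2 Nx Ny hx hy (lap Nx Ny hx hy Z1) - norm_m2 Nx Ny hx hy (lap Nx Ny hx hy Z0)) / 2
      + \<alpha> * ((norm_m2 Nx Ny hx hy Z1 - norm_m2 Nx Ny hx hy Z0) / 2) + (R1^2 - R0^2)
      + (gip e1 e1 / (2*M) - gip e0 e0 / (2*M))
      - grad_norm2 Nx Ny hx hy Z1 + grad_norm2 Nx Ny hx hy Z0
      + 1/2 * grad_diff_norm2 Nx Ny hx hy Z1 Z0 - 1/2 * grad_diff_norm2 Nx Ny hx hy Z0 Zm"
    by (simp add: algebra_simps diff_divide_distrib)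
  also have "\<dots> = (2 * gip Zt u - grad_norm2 Nx Ny hx hy Z1 + grad_norm2 Nx Ny hx hy Z0
      + 1/2 * grad_diff_norm2 Nx Ny hx hy Z1 Z0 - 1/2 * grad_diff_norm2 Nx Ny hx hy Z0 Zm) - \<beta> / M * dt * gip eh eh"
    unfolding psi' Wid by (simp add: field_simps)
  also have "\<dots> \<le> - (\<beta> / M) * dt * gip eh eh" using gi by simp
  finally show ?thesis using P1 mass nh by simp
qed

end

definition Aop :: "nat \<Rightarrow> nat \<Rightarrow> real \<Rightarrow> real \<Rightarrow> real \<Rightarrow> real \<Rightarrow> grid \<Rightarrow> grid \<Rightarrow> grid" where
  "Aop Nx Ny hx hy \<alpha> E g d = (\<lambda>i j. lap Nx Ny hx hy (lap Nx Ny hx hy d) i j / 2 + \<alpha> / 2 * d i j + ip_m Nx Ny hx hy g d / (4 * E) * g i j)"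

lemma Aop_diff: "Aop Nx Ny hx hy \<alpha> E g (\<lambda>i j. f i j - h i j) = (\<lambda>i j. Aop Nx Ny hx hy \<alpha> E g f i j - Aop Nx Ny hx hy \<alpha> E g h i j)"
proof -
  have l: "lap Nx Ny hx hy (lap Nx Ny hx hy (\<lambda>i j. f i j - h i j)) = (\<lambda>i j. lap Nx Ny hx hy (lap Nx Ny hx hy f) i j - lap Nx Ny hx hy (lap Nx Ny hx hy h) i j)"
    by (simp add: lap_diff)
  have p: "ip_m Nx Ny hx hy g (\<lambda>i j. f i j - h i j) = ip_m Nx Ny hx hy g f - ip_m Nx Ny hx hy g h"
    using ip_m_lin_right[of Nx Ny hx hy g 1 f "-1" h] by simp
  show ?thesis unfolding Aop_def l p by (simp add: fun_eq_iff diff_divide_distrib algebra_simps)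
qed

lemma Aop_lin: "Aop Nx Ny hx hy \<alpha> E g (\<lambda>i j. a * f i j + b * h i j) = (\<lambda>i j. a * Aop Nx Ny hx hy \<alpha> E g f i j + b * Aop Nx Ny hx hy \<alpha> E g h i j)"
proof -
  have l: "lap Nx Ny hx hy (lap Nx Ny hx hy (\<lambda>i j. a * f i j + b * h i j)) = (\<lambda>i j. a * lap Nx Ny hx hy (lap Nx Ny hx hy f) i j + b * lap Nx Ny hx hy (lap Nx Ny hx hy h) i j)"
    by (simp add: lap_lin)
  have p: "ip_m Nx Ny hx hy g (\<lambda>i j. a * f i j + b * h i j) = a * ip_m Nx Ny hx hy g f + b * ip_m Nx Ny hx hy g h"
    by (rule ip_m_lin_right)
  show ?thesis unfolding Aop_def l p by (simp add: fun_eq_iff add_divide_distrib algebra_simps)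
qed

context G begin

lemma Aop_cong: assumes "\<And>i j. in_grid Nx Ny i j \<Longrightarrow> f i j = h i j"
  shows "lap Nx Ny hx hy (Aop Nx Ny hx hy \<alpha> E g f) = lap Nx Ny hx hy (Aop Nx Ny hx hy \<alpha> E g h)"
proof (rule lap_cong)
  fix i j assume ij: "in_grid Nx Ny i j"
  have "lap Nx Ny hx hy f = lap Nx Ny hx hy h" by (rule lap_cong) (use assms in auto)
  moreover have "ip_m Nx Ny hx hy g f = ip_m Nx Ny hx hy g h" by (rule ip_m_cong) (use assms in auto)
  ultimately show "Aop Nx Ny hx hy \<alpha> E g f i j = Aop Nx Ny hx hy \<alpha> E g h i j"
    unfolding Aop_def using assms[OF ij] by simp
qed

lemma sol_char:
  fixes M \<beta> \<alpha> dt R0 R1 :: real and Zm Z0 Psi0 Z1 Psi1 W :: grid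
  assumes M: "M > 0" and \<beta>: "\<beta> > 0" and \<alpha>: "\<alpha> \<ge> 0" and dt: "dt > 0"
    and Epos: "E1h Nx Ny hx hy (\<lambda>i j. (3 * Z0 i j - Zm i j) / 2) > 0"
    and sch: "scheme Nx Ny hx hy M \<beta> \<alpha> dt Zm Z0 Psi0 R0 Z1 Psi1 W R1"
  defines "Zt \<equiv> (\<lambda>i j. (3 * Z0 i j - Zm i j) / 2)"
  defines "E \<equiv> E1h Nx Ny hx hy Zt"
  defines "g \<equiv> (\<lambda>i j. dFpot (Zt i j))"
  defines "d \<equiv> (\<lambda>i j. Z1 i j - Z0 i j)"
  defines "V0 \<equiv> (\<lambda>i j. lap Nx Ny hx hy (lap Nx Ny hx hy Z0) i j + 2 * lap Nx Ny hx hy Zt i j + \<alpha> * Z0 i j + R0 / sqrt E * g i j)"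
  shows "\<And>i j. in_grid Nx Ny i j \<Longrightarrow> (2 / dt + \<beta>) * d i j - (M * dt) * lap Nx Ny hx hy (Aop Nx Ny hx hy \<alpha> E g d) i j
            = 2 * Psi0 i j + (M * dt) * lap Nx Ny hx hy V0 i j"
    and "\<And>i j. in_grid Nx Ny i j \<Longrightarrow> Psi1 i j = 2 * d i j / dt - Psi0 i j"
    and "R1 = R0 + ip_m Nx Ny hx hy g d / (2 * sqrt E)"
    and "\<And>i j. in_grid Nx Ny i j \<Longrightarrow> W i j = lap Nx Ny hx hy (lap Nx Ny hx hy (\<lambda>i j. (Z1 i j + Z0 i j) / 2)) i j
            + 2 * lap Nx Ny hx hy Zt i j + \<alpha> * ((Z1 i j + Z0 i j) / 2) + ((R1 + R0) / 2) / sqrt E * g i j"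
proof -
  have E: "E > 0" using Epos by (simp add: E_def Zt_def)
  have eq1: "Psi1 i j - Psi0 i j + \<beta> * dt * ((Psi1 i j + Psi0 i j) / 2) = M * dt * lap Nx Ny hx hy W i j"
    if "in_grid Nx Ny i j" for i j
    using sch that unfolding scheme_def Let_def by auto
  have eq2: "dt * ((Psi1 i j + Psi0 i j) / 2) = Z1 i j - Z0 i j"
    if "in_grid Nx Ny i j" for i j
    using sch that unfolding scheme_def Let_def by auto
  show eqW: "W i j = lap Nx Ny hx hy (lap Nx Ny hx hy (\<lambda>i j. (Z1 i j + Z0 i j) / 2)) i j
            + 2 * lap Nx Ny hx hy Zt i j + \<alpha> * ((Z1 i j + Z0 i j) / 2) + ((R1 + R0) / 2) / sqrt E * g i j"
    if "in_grid Nx Ny i j" for i j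
    using sch that unfolding scheme_def Let_def Zt_def E_def g_def by auto
  have eqR: "R1 - R0 = 1 / (2 * sqrt E) * ip_m Nx Ny hx hy g d"
    using sch unfolding scheme_def Let_def Zt_def E_def g_def d_def by auto
  show R1: "R1 = R0 + ip_m Nx Ny hx hy g d / (2 * sqrt E)" using eqR by simp
  show P1: "Psi1 i j = 2 * d i j / dt - Psi0 i j" if "in_grid Nx Ny i j" for i j
    using eq2[OF that] dt unfolding d_def by (simp add: field_simps)
  have Zh: "(\<lambda>i j. (Z1 i j + Z0 i j) / 2) = (\<lambda>i j. 1/2 * d i j + 1 * Z0 i j)"
    by (simp add: d_def fun_eq_iff field_simps)
  have llZh: "lap Nx Ny hx hy (lap Nx Ny hx hy (\<lambda>i j. (Z1 i j + Z0 i j) / 2))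
     = (\<lambda>i j. 1/2 * lap Nx Ny hx hy (lap Nx Ny hx hy d) i j + 1 * lap Nx Ny hx hy (lap Nx Ny hx hy Z0) i j)"
    unfolding Zh lap_lin by (rule refl)
  have sE: "sqrt E * sqrt E = E" using E by simp
  have Wform: "W i j = V0 i j + Aop Nx Ny hx hy \<alpha> E g d i j" if "in_grid Nx Ny i j" for i j
  proof -
    have "((R1 + R0) / 2) / sqrt E = R0 / sqrt E + ip_m Nx Ny hx hy g d / (4 * E)"
      unfolding R1 using E sE by (simp add: field_simps)
    then show ?thesis unfolding eqW[OF that] llZh V0_def Aop_def
      by (simp add: d_def field_simps)
  qed
  have lW: "lap Nx Ny hx hy W = (\<lambda>i j. 1 * lap Nx Ny hx hy V0 i j + 1 * lap Nx Ny hx hy (Aop Nx Ny hx hy \<alpha> E g d) i j)"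
  proof -
    have "lap Nx Ny hx hy W = lap Nx Ny hx hy (\<lambda>i j. 1 * V0 i j + 1 * Aop Nx Ny hx hy \<alpha> E g d i j)"
      by (rule lap_cong) (simp add: Wform)
    then show ?thesis by (simp only: lap_lin)
  qed
  show "(2 / dt + \<beta>) * d i j - (M * dt) * lap Nx Ny hx hy (Aop Nx Ny hx hy \<alpha> E g d) i j
            = 2 * Psi0 i j + (M * dt) * lap Nx Ny hx hy V0 i j" if "in_grid Nx Ny i j" for i j
  proof -
    have "M * dt * lap Nx Ny hx hy W i j = (2 / dt + \<beta>) * d i j - 2 * Psi0 i j"
      using eq1[OF that] P1[OF that] dt by (simp add: field_simps)
    then show ?thesis unfolding lW by (simp add: algebra_simps)
  qed
qed

end

context G begin

lemma exist_uniq: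
  fixes M \<beta> \<alpha> dt R0 :: real and Zm Z0 Psi0 :: grid
  assumes M: "M > 0" and \<beta>: "\<beta> > 0" and \<alpha>: "\<alpha> \<ge> 0" and dt: "dt > 0"
    and Epos: "E1h Nx Ny hx hy (\<lambda>i j. (3 * Z0 i j - Zm i j) / 2) > 0"
  shows "\<exists>!(Z1, Psi1, W, R1). gridfun Nx Ny Z1 \<and> gridfun Nx Ny Psi1 \<and> gridfun Nx Ny W \<and>
            scheme Nx Ny hx hy M \<beta> \<alpha> dt Zm Z0 Psi0 R0 Z1 Psi1 W R1"
proof -
  define Zt where "Zt = (\<lambda>i j. (3 * Z0 i j - Zm i j) / 2)"
  define E where "E = E1h Nx Ny hx hy Zt"
  define g where "g = (\<lambda>i j. dFpot (Zt i j))"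
  define V0 where "V0 = (\<lambda>i j. lap Nx Ny hx hy (lap Nx Ny hx hy Z0) i j + 2 * lap Nx Ny hx hy Zt i j + \<alpha> * Z0 i j + R0 / sqrt E * g i j)"
  define c where "c = 2 / dt + \<beta>"
  define K where "K = M * dt"
  have E: "E > 0" using Epos by (simp add: E_def Zt_def)
  have c: "c > 0" using dt \<beta> by (simp add: c_def add_pos_pos)
  have K: "K > 0" using M dt by (simp add: K_def)
  note SC = sol_char[OF M \<beta> \<alpha> dt Epos]
  have inj: "\<delta> = 0" if "gridfun Nx Ny \<delta>"
    and "\<And>i j. in_grid Nx Ny i j \<Longrightarrow> c * \<delta> i j = K * lap Nx Ny hx hy (Aop Nx Ny hx hy \<alpha> E g \<delta>) i j" for \<delta>
    using core_inj[OF c K \<alpha> E that(1)] that(2) unfolding Aop_def by blast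
  have uniq: "Z1 = Z1' \<and> Psi1 = Psi1' \<and> W = W' \<and> R1 = R1'"
    if s1: "gridfun Nx Ny Z1" "gridfun Nx Ny Psi1" "gridfun Nx Ny W" "scheme Nx Ny hx hy M \<beta> \<alpha> dt Zm Z0 Psi0 R0 Z1 Psi1 W R1"
    and s2: "gridfun Nx Ny Z1'" "gridfun Nx Ny Psi1'" "gridfun Nx Ny W'" "scheme Nx Ny hx hy M \<beta> \<alpha> dt Zm Z0 Psi0 R0 Z1' Psi1' W' R1'"
    for Z1 Psi1 W R1 Z1' Psi1' W' R1'
  proof -
    define d where "d = (\<lambda>i j. Z1 i j - Z0 i j)"
    define d' where "d' = (\<lambda>i j. Z1' i j - Z0 i j)"
    define \<delta> where "\<delta> = (\<lambda>i j. Z1 i j - Z1' i j)"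
    have dd: "\<delta> = (\<lambda>i j. d i j - d' i j)" by (simp add: \<delta>_def d_def d'_def fun_eq_iff)
    have la: "lap Nx Ny hx hy (Aop Nx Ny hx hy \<alpha> E g \<delta>) = (\<lambda>i j. lap Nx Ny hx hy (Aop Nx Ny hx hy \<alpha> E g d) i j - lap Nx Ny hx hy (Aop Nx Ny hx hy \<alpha> E g d') i j)"
      unfolding dd Aop_diff by (rule lap_diff)
    have gd: "gridfun Nx Ny \<delta>" using s1(1) s2(1) by (simp add: gridfun_def \<delta>_def)
    have "\<delta> = 0"
    proof (rule inj[OF gd])
      fix i j assume ij: "in_grid Nx Ny i j"
      have a: "c * d i j - K * lap Nx Ny hx hy (Aop Nx Ny hx hy \<alpha> E g d) i j = 2 * Psi0 i j + K * lap Nx Ny hx hy V0 i j"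
        using SC(1)[OF s1(4) ij] unfolding c_def K_def d_def g_def V0_def Zt_def E_def by simp
      have b: "c * d' i j - K * lap Nx Ny hx hy (Aop Nx Ny hx hy \<alpha> E g d') i j = 2 * Psi0 i j + K * lap Nx Ny hx hy V0 i j"
        using SC(1)[OF s2(4) ij] unfolding c_def K_def d'_def g_def V0_def Zt_def E_def by simp
      show "c * \<delta> i j = K * lap Nx Ny hx hy (Aop Nx Ny hx hy \<alpha> E g \<delta>) i j"
        unfolding la using a b by (simp add: dd algebra_simps)
    qed
    then have Z: "Z1 = Z1'" by (simp add: \<delta>_def fun_eq_iff)
    have R: "R1 = R1'" using SC(3)[OF s1(4)] SC(3)[OF s2(4)] Z by simp
    have P: "Psi1 = Psi1'"
    proof (intro ext)
      fix i j show "Psi1 i j = Psi1' i j"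
      proof (cases "in_grid Nx Ny i j")
        case True then show ?thesis using SC(2)[OF s1(4) True] SC(2)[OF s2(4) True] Z by simp
      next
        case False then show ?thesis using s1(2) s2(2) by (simp add: gridfun_def)
      qed
    qed
    have Wq: "W = W'"
    proof (intro ext)
      fix i j show "W i j = W' i j"
      proof (cases "in_grid Nx Ny i j")
        case True then show ?thesis using SC(4)[OF s1(4) True] SC(4)[OF s2(4) True] Z R by simp
      next
        case False then show ?thesis using s1(3) s2(3) by (simp add: gridfun_def)
      qed
    qed
    show ?thesis using Z P Wq R by simp
  qed
  define T where "T = (\<lambda>\<delta>. mask Nx Ny (\<lambda>i j. c * \<delta> i j - K * lap Nx Ny hx hy (Aop Nx Ny hx hy \<alpha> E g \<delta>) i j))"
  have lin: "Vector_Spaces.linear sc sc T"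
    unfolding Vector_Spaces.linear_iff
  proof (intro conjI allI vs_sc)
    fix x y :: grid
    have "x + y = (\<lambda>i j. 1 * x i j + 1 * y i j)" by (simp add: plus_fun_def)
    then have "lap Nx Ny hx hy (Aop Nx Ny hx hy \<alpha> E g (x + y)) = (\<lambda>i j. 1 * lap Nx Ny hx hy (Aop Nx Ny hx hy \<alpha> E g x) i j + 1 * lap Nx Ny hx hy (Aop Nx Ny hx hy \<alpha> E g y) i j)"
      by (simp only: Aop_lin lap_lin)
    then show "T (x + y) = T x + T y"
      unfolding T_def by (auto simp: fun_eq_iff mask_def plus_fun_def algebra_simps)
  next
    fix a :: real and x :: grid
    have "sc a x = (\<lambda>i j. a * x i j + 0 * x i j)" by (simp add: sc_def)
    then have "lap Nx Ny hx hy (Aop Nx Ny hx hy \<alpha> E g (sc a x)) = (\<lambda>i j. a * lap Nx Ny hx hy (Aop Nx Ny hx hy \<alpha> E g x) i j + 0 * lap Nx Ny hx hy (Aop Nx Ny hx hy \<alpha> E g x) i j)"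
      by (simp only: Aop_lin lap_lin)
    then show "T (sc a x) = sc a (T x)"
      unfolding T_def by (auto simp: fun_eq_iff mask_def sc_def algebra_simps)
  qed
  have into: "gridfun Nx Ny (T h)" for h by (simp add: T_def gridfun_def mask_def)
  have ker: "h = 0" if "gridfun Nx Ny h" "T h = 0" for h
  proof (rule inj[OF that(1)])
    fix i j assume ij: "in_grid Nx Ny i j"
    show "c * h i j = K * lap Nx Ny hx hy (Aop Nx Ny hx hy \<alpha> E g h) i j"
      using fun_cong[OF fun_cong[OF that(2), of i], of j] ij by (simp add: T_def mask_def)
  qed
  obtain \<delta> where \<delta>: "gridfun Nx Ny \<delta>" "T \<delta> = mask Nx Ny (\<lambda>i j. 2 * Psi0 i j + K * lap Nx Ny hx hy V0 i j)"
  proof -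
    have "gridfun Nx Ny (mask Nx Ny (\<lambda>i j. 2 * Psi0 i j + K * lap Nx Ny hx hy V0 i j))"
      by (simp add: gridfun_def mask_def)
    then show ?thesis using grid_surj[OF lin into ker] that by blast
  qed
  have Teq: "c * \<delta> i j - K * lap Nx Ny hx hy (Aop Nx Ny hx hy \<alpha> E g \<delta>) i j = 2 * Psi0 i j + K * lap Nx Ny hx hy V0 i j"
    if "in_grid Nx Ny i j" for i j
    using fun_cong[OF fun_cong[OF \<delta>(2), of i], of j] that by (simp add: T_def mask_def)
  define Z1 where "Z1 = (\<lambda>i j. \<delta> i j + mask Nx Ny Z0 i j)"
  define Psi1 where "Psi1 = mask Nx Ny (\<lambda>i j. 2 * \<delta> i j / dt - Psi0 i j)"
  define R1 where "R1 = R0 + ip_m Nx Ny hx hy g \<delta> / (2 * sqrt E)"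
  define Wf where "Wf = (\<lambda>i j. lap Nx Ny hx hy (lap Nx Ny hx hy (\<lambda>i j. (Z1 i j + Z0 i j) / 2)) i j
            + 2 * lap Nx Ny hx hy Zt i j + \<alpha> * ((Z1 i j + Z0 i j) / 2) + ((R1 + R0) / 2) / sqrt E * g i j)"
  define W where "W = mask Nx Ny Wf"
  have Z1g: "Z1 i j = \<delta> i j + Z0 i j" if "in_grid Nx Ny i j" for i j using that by (simp add: Z1_def mask_def)
  have gZ1: "gridfun Nx Ny Z1" using \<delta>(1) by (simp add: Z1_def gridfun_def mask_def)
  have gP1: "gridfun Nx Ny Psi1" by (simp add: Psi1_def gridfun_def mask_def)
  have gW: "gridfun Nx Ny W" by (simp add: W_def gridfun_def mask_def)
  have sE: "sqrt E * sqrt E = E" using E by simp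
  have ipZ: "ip_m Nx Ny hx hy g (\<lambda>i j. Z1 i j - Z0 i j) = ip_m Nx Ny hx hy g \<delta>"
    by (rule ip_m_cong) (simp_all add: Z1g)
  have lZh: "lap Nx Ny hx hy (\<lambda>i j. (Z1 i j + Z0 i j) / 2) = lap Nx Ny hx hy (\<lambda>i j. 1/2 * \<delta> i j + 1 * Z0 i j)"
    by (rule lap_cong) (simp add: Z1g field_simps)
  have Wfeq: "Wf i j = 1 * V0 i j + 1 * Aop Nx Ny hx hy \<alpha> E g \<delta> i j" if "in_grid Nx Ny i j" for i j
  proof -
    have r: "((R1 + R0) / 2) / sqrt E = R0 / sqrt E + ip_m Nx Ny hx hy g \<delta> / (4 * E)"
      unfolding R1_def using E sE by (simp add: field_simps)
    show ?thesis unfolding Wf_def lZh lap_lin r V0_def Aop_def using that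
      by (simp add: Z1g field_simps)
  qed
  have lW: "lap Nx Ny hx hy W = (\<lambda>i j. 1 * lap Nx Ny hx hy V0 i j + 1 * lap Nx Ny hx hy (Aop Nx Ny hx hy \<alpha> E g \<delta>) i j)"
  proof -
    have "lap Nx Ny hx hy W = lap Nx Ny hx hy (\<lambda>i j. 1 * V0 i j + 1 * Aop Nx Ny hx hy \<alpha> E g \<delta> i j)"
      by (rule lap_cong) (simp add: W_def mask_def Wfeq)
    then show ?thesis by (simp only: lap_lin)
  qed
  have sch: "scheme Nx Ny hx hy M \<beta> \<alpha> dt Zm Z0 Psi0 R0 Z1 Psi1 W R1"
    unfolding scheme_def Let_def
  proof (intro conjI allI impI)
    fix i j assume ij: "in_grid Nx Ny i j"
    have P: "Psi1 i j = 2 * \<delta> i j / dt - Psi0 i j" using ij by (simp add: Psi1_def mask_def)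
    show "dt * ((Psi1 i j + Psi0 i j) / 2) = Z1 i j - Z0 i j"
      using P dt Z1g[OF ij] by (simp add: field_simps)
    show "Psi1 i j - Psi0 i j + \<beta> * dt * ((Psi1 i j + Psi0 i j) / 2) = M * dt * lap Nx Ny hx hy W i j"
    proof -
      have e1: "Psi1 i j - Psi0 i j + \<beta> * dt * ((Psi1 i j + Psi0 i j) / 2) = (2/dt+\<beta>) * \<delta> i j - 2 * Psi0 i j"
        unfolding P using dt by (simp add: field_simps)
      have e2: "M * dt * lap Nx Ny hx hy W i j = M * dt * lap Nx Ny hx hy V0 i j + M * dt * lap Nx Ny hx hy (Aop Nx Ny hx hy \<alpha> E g \<delta>) i j"
        unfolding lW by (simp add: algebra_simps)
      show ?thesis using e1 e2 Teq[OF ij] unfolding c_def K_def by linarith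
    qed
    show "W i j = lap Nx Ny hx hy (lap Nx Ny hx hy (\<lambda>i j. (Z1 i j + Z0 i j) / 2)) i j +
          2 * lap Nx Ny hx hy (\<lambda>i j. (3 * Z0 i j - Zm i j) / 2) i j + \<alpha> * ((Z1 i j + Z0 i j) / 2) +
          (R1 + R0) / 2 / sqrt (E1h Nx Ny hx hy (\<lambda>i j. (3 * Z0 i j - Zm i j) / 2)) * dFpot ((3 * Z0 i j - Zm i j) / 2)"
      using ij by (simp add: W_def mask_def Wf_def Zt_def E_def g_def)
  next
    show "R1 - R0 = 1 / (2 * sqrt (E1h Nx Ny hx hy (\<lambda>i j. (3 * Z0 i j - Zm i j) / 2))) *
        ip_m Nx Ny hx hy (\<lambda>i j. dFpot ((3 * Z0 i j - Zm i j) / 2)) (\<lambda>i j. Z1 i j - Z0 i j)"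
      using ipZ unfolding R1_def g_def E_def Zt_def by simp
  qed
  show ?thesis
  proof (rule ex1I[of _ "(Z1, Psi1, W, R1)"])
    show "case (Z1, Psi1, W, R1) of (Z1, Psi1, W, R1) \<Rightarrow> gridfun Nx Ny Z1 \<and> gridfun Nx Ny Psi1 \<and> gridfun Nx Ny W \<and>
            scheme Nx Ny hx hy M \<beta> \<alpha> dt Zm Z0 Psi0 R0 Z1 Psi1 W R1"
      using gZ1 gP1 gW sch by simp
  next
    fix x assume x: "case x of (Z1, Psi1, W, R1) \<Rightarrow> gridfun Nx Ny Z1 \<and> gridfun Nx Ny Psi1 \<and> gridfun Nx Ny W \<and>
            scheme Nx Ny hx hy M \<beta> \<alpha> dt Zm Z0 Psi0 R0 Z1 Psi1 W R1"
    obtain a b e f where xe: "x = (a, b, e, f)" by (metis prod_cases4)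
    show "x = (Z1, Psi1, W, R1)" using uniq[of a b e f Z1 Psi1 W R1] x gZ1 gP1 gW sch unfolding xe by simp
  qed
qed

end

theorem theorem3p2:
  fixes Lx Ly hx hy M \<beta> \<alpha> dt R0 :: real and Nx Ny :: nat
    and Zm Z0 Psi0 :: grid
  assumes "Lx > 0" "Ly > 0" "Nx > 0" "Ny > 0"
    and "hx = Lx / real Nx" "hy = Ly / real Ny"
    and "M > 0" "\<beta> > 0" "\<alpha> \<ge> 0" "dt > 0"
    and "E1h Nx Ny hx hy (\<lambda>i j. (3 * Z0 i j - Zm i j) / 2) > 0"
  shows "(\<exists>!(Z1, Psi1, W, R1). gridfun Nx Ny Z1 \<and> gridfun Nx Ny Psi1 \<and> gridfun Nx Ny W \<and>
            scheme Nx Ny hx hy M \<beta> \<alpha> dt Zm Z0 Psi0 R0 Z1 Psi1 W R1)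
     \<and> (\<forall>Z1 Psi1 W R1. gridfun Nx Ny Z1 \<and> gridfun Nx Ny Psi1 \<and> gridfun Nx Ny W \<and>
            scheme Nx Ny hx hy M \<beta> \<alpha> dt Zm Z0 Psi0 R0 Z1 Psi1 W R1 \<longrightarrow>
            ip_m Nx Ny hx hy Psi0 (\<lambda>_ _. 1) = 0 \<longrightarrow>
              ip_m Nx Ny hx hy Psi1 (\<lambda>_ _. 1) = 0
            \<and> ip_m Nx Ny hx hy Z1 (\<lambda>_ _. 1) = ip_m Nx Ny hx hy Z0 (\<lambda>_ _. 1)
            \<and> Ed_tilde Nx Ny hx hy \<alpha> M Z1 Z0 R1 Psi1 - Ed_tilde Nx Ny hx hy \<alpha> M Z0 Zm R0 Psi0
                \<le> - (\<beta> / M) * dt *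
                   (norm_neg1 Nx Ny hx hy (\<lambda>i j. (Psi1 i j + Psi0 i j) / 2))^2)"
  proof -
  have hx: "hx > 0" using assms(1,3,5) by simp
  have hy: "hy > 0" using assms(2,4,6) by simp
  interpret G Nx Ny hx hy by unfold_locales (use assms(3,4) hx hy in auto)
  show ?thesis
  proof (rule conjI)
    show "\<exists>!(Z1, Psi1, W, R1). gridfun Nx Ny Z1 \<and> gridfun Nx Ny Psi1 \<and> gridfun Nx Ny W \<and>
            scheme Nx Ny hx hy M \<beta> \<alpha> dt Zm Z0 Psi0 R0 Z1 Psi1 W R1"
      by (rule exist_uniq[OF assms(7,8,9,10,11)])
  next
    show "\<forall>Z1 Psi1 W R1. gridfun Nx Ny Z1 \<and> gridfun Nx Ny Psi1 \<and> gridfun Nx Ny W \<and>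
            scheme Nx Ny hx hy M \<beta> \<alpha> dt Zm Z0 Psi0 R0 Z1 Psi1 W R1 \<longrightarrow>
            ip_m Nx Ny hx hy Psi0 (\<lambda>_ _. 1) = 0 \<longrightarrow>
              ip_m Nx Ny hx hy Psi1 (\<lambda>_ _. 1) = 0
            \<and> ip_m Nx Ny hx hy Z1 (\<lambda>_ _. 1) = ip_m Nx Ny hx hy Z0 (\<lambda>_ _. 1)
            \<and> Ed_tilde Nx Ny hx hy \<alpha> M Z1 Z0 R1 Psi1 - Ed_tilde Nx Ny hx hy \<alpha> M Z0 Zm R0 Psi0
                \<le> - (\<beta> / M) * dt *
                   (norm_neg1 Nx Ny hx hy (\<lambda>i j. (Psi1 i j + Psi0 i j) / 2))^2"
    proof (intro allI impI)
      fix Z1 Psi1 W R1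
      assume h: "gridfun Nx Ny Z1 \<and> gridfun Nx Ny Psi1 \<and> gridfun Nx Ny W \<and>
            scheme Nx Ny hx hy M \<beta> \<alpha> dt Zm Z0 Psi0 R0 Z1 Psi1 W R1"
        and P0: "ip_m Nx Ny hx hy Psi0 (\<lambda>_ _. 1) = 0"
      from h have h1: "gridfun Nx Ny Z1" and h2: "gridfun Nx Ny Psi1" and h3: "gridfun Nx Ny W"
        and h4: "scheme Nx Ny hx hy M \<beta> \<alpha> dt Zm Z0 Psi0 R0 Z1 Psi1 W R1" by auto
      show "ip_m Nx Ny hx hy Psi1 (\<lambda>_ _. 1) = 0
            \<and> ip_m Nx Ny hx hy Z1 (\<lambda>_ _. 1) = ip_m Nx Ny hx hy Z0 (\<lambda>_ _. 1)
            \<and> Ed_tilde Nx Ny hx hy \<alpha> M Z1 Z0 R1 Psi1 - Ed_tilde Nx Ny hx hy \<alpha> M Z0 Zm R0 Psi0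
                \<le> - (\<beta> / M) * dt *
                   (norm_neg1 Nx Ny hx hy (\<lambda>i j. (Psi1 i j + Psi0 i j) / 2))^2"
        by (rule energy_part[OF assms(7,8,9,10,11) h1 h2 h3 h4 P0])
    qed
  qed
qed

end
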